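(* In the setting described in the context, assume moreover that there is $\beta$ with $0<\beta<\alpha$ such that for every $\delta>0$ there is a constant $c_\delta$ with $|\frac{\partial}{\partial x}u^\epsilon(x,t)|\leq c_\delta\,\epsilon^{-\beta}$ for all $x\in\mathbb{R}$, $t\in[0,\delta]$, $\epsilon\in(0,1)$. Then the family $(u^\epsilon,v^\epsilon)$ is a weak asymptotic method for the equation $\frac{\partial v}{\partial t}+\frac{\partial}{\partial x}(uv)=0$, i.e. for every $\psi\in\mathcal{C}^\infty(\mathbb{R})$ with compact support and every $t\geq0$, $$\int_{\mathbb{R}}\Big[\frac{\partial v^\epsilon}{\partial t}(x,t)\psi(x)-u^\epsilon(x,t)v^\epsilon(x,t)\psi'(x)\Big]dx\longrightarrow 0\quad(\epsilon\to0).$$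
   Context: Let $\mathcal{C}_b(\mathbb{R})$ denote the Banach space of bounded continuous real functions on $\mathbb{R}$ with the sup norm. For a real function $u$ set $u^+=\max(0,u)$, $u^-=\max(0,-u)$. For $0<\epsilon<1$ let $u^\epsilon:\mathbb{R}\times[0,\infty)\to\mathbb{R}$ be $2\pi$-periodic in $x$, differentiable in $x$, with $t\mapsto u^\epsilon(\cdot,t)$ continuous from $[0,\infty)$ into $\mathcal{C}_b(\mathbb{R})$, and assume there is $M_1>0$ with $|u^\epsilon(x,t)|\leq M_1$ for all $\epsilon,x,t\ge0$. Let $v_0^\epsilon\in\mathcal{C}_b(\mathbb{R})$ be $2\pi$-periodic with $\sup_{\epsilon}\int_{-\pi}^{\pi}|v_0^\epsilon|dx<\infty$. Let $X^\epsilon$ be the unique global $\mathcal{C}^1$ solution $[0,\infty)\to\mathcal{C}_b(\mathbb{R})$ of $$\frac{d}{dt}X^\epsilon(x,t)=\frac{1}{\epsilon}\big[X^\epsilon(x-\epsilon,t)u^{\epsilon+}(x-\epsilon,t)-X^\epsilon(x,t)|u^{\epsilon}(x,t)|+X^\epsilon(x+\epsilon,t)u^{\epsilon-}(x+\epsilon,t)\big],\quad X^\epsilon(x,0)=v_0^\epsilon(x).$$ Let $\phi\in\mathcal{C}^\infty(\mathbb{R})$ have compact support with $\int\phi=1$, let $\alpha\in]0,1]$, $\phi_{\epsilon^\alpha}(x)=\epsilon^{-\alpha}\phi(x/\epsilon^\alpha)$, and define $v^\epsilon(x,t)=(X^\epsilon(\cdot,t)*\phi_{\epsilon^\alpha})(x)$.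 *)

theory Defs
  imports "HOL-Analysis.Analysis"
begin

definition smooth_fun :: "(real \<Rightarrow> real) \<Rightarrow> bool" where
  "smooth_fun f \<longleftrightarrow> (\<exists>D :: nat \<Rightarrow> real \<Rightarrow> real. D 0 = f \<and>
      (\<forall>n x. (D n has_real_derivative D (Suc n) x) (at x)))"

definition compact_supp :: "(real \<Rightarrow> real) \<Rightarrow> bool" where
  "compact_supp f \<longleftrightarrow> compact (closure {x. f x \<noteq> 0})"

definition mollifier :: "real \<Rightarrow> (real \<Rightarrow> real) \<Rightarrow> real \<Rightarrow> real" where
  "mollifier a phi x = phi (x / a) / a"

definition conv :: "(real \<Rightarrow> real) \<Rightarrow> (real \<Rightarrow> real) \<Rightarrow> real \<Rightarrow> real" where
  "conv f g x = integral UNIV (\<lambda>y. f y * g (x - y))"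

definition vfam :: "(real \<Rightarrow> real \<Rightarrow> (real \<Rightarrow>\<^sub>C real)) \<Rightarrow> (real \<Rightarrow> real) \<Rightarrow> real
    \<Rightarrow> real \<Rightarrow> real \<Rightarrow> real \<Rightarrow> real" where
  "vfam X phi alpha e x t = conv (\<lambda>y. X e t y) (mollifier (e powr alpha) phi) x"

end

theory Submission
  imports Defs
begin

lemma integral_translate_real:
  fixes f :: "real \<Rightarrow> real"
  assumes "continuous_on {a+c..b+c} f"
  shows "integral {a..b} (\<lambda>x. f (x + c)) = integral {a+c..b+c} f"
proof -
  have "(f has_integral integral {a+c..b+c} f) (cbox (a+c) (b+c))"
    using integrable_continuous_real[OF assms] by (simp add: has_integral_integral)
  from has_integral_affinity[OF this, of 1 c]
  have "((\<lambda>x. f (x + c)) has_integral integral {a+c..b+c} f) ((\<lambda>x. x + - c) ` {a+c..b+c})"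
    by simp
  moreover have "(\<lambda>x. x + - c) ` {a+c..b+c} = {a..b}"
    by (auto simp: image_iff intro!: bexI[where x="_ + c"])
  ultimately show ?thesis by (simp add: integral_unique)
qed

lemma periodic_integral_aux:
  fixes g :: "real \<Rightarrow> real"
  assumes cont: "continuous_on UNIV g" and per: "\<And>x. g (x + 2*pi) = g x"
    and c: "-pi \<le> c" "c \<le> pi"
  shows "integral {c..c+2*pi} g = integral {-pi..pi} g"
proof -
  have int: "g integrable_on {a..b}" for a b
    using cont by (intro integrable_continuous_real) (auto intro: continuous_on_subset)
  have "integral {c..c+2*pi} g = integral {c..pi} g + integral {pi..c+2*pi} g"
    using Henstock_Kurzweil_Integration.integral_combine[of c pi "c+2*pi" g] c int[of c "c+2*pi"] pi_gt_zero by auto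
  also have "integral {pi..c+2*pi} g = integral {-pi..c} (\<lambda>x. g (x + 2*pi))"
    using integral_translate_real[of "-pi" "2*pi" c g] continuous_on_subset[OF cont subset_UNIV]
    by simp
  also have "\<dots> = integral {-pi..c} g" using per by simp
  also have "integral {c..pi} g + integral {-pi..c} g = integral {-pi..pi} g"
    using c int by (subst add.commute, intro Henstock_Kurzweil_Integration.integral_combine) auto
  finally show ?thesis .
qed

lemma periodic_integral:
  fixes g :: "real \<Rightarrow> real"
  assumes cont: "continuous_on UNIV g" and per: "\<And>x. g (x + 2*pi) = g x"
    and c: "-3*pi \<le> c" "c \<le> pi"
  shows "integral {c..c+2*pi} g = integral {-pi..pi} g"
proof (cases "c \<ge> -pi")
  case True
  then show ?thesis using periodic_integral_aux[OF cont per] c by auto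
next
  case False
  have "integral {c..c+2*pi} g = integral {c..c+2*pi} (\<lambda>x. g (x + 2*pi))"
    using per by simp
  also have "\<dots> = integral {c+2*pi..(c+2*pi)+2*pi} g"
    using integral_translate_real[of c "2*pi" "c+2*pi" g] continuous_on_subset[OF cont subset_UNIV]
    by (simp add: algebra_simps)
  also have "\<dots> = integral {-pi..pi} g"
    using False c by (intro periodic_integral_aux[OF cont per]) auto
  finally show ?thesis .
qed

lemma periodic_integral_multi:
  fixes g :: "real \<Rightarrow> real"
  assumes cont: "continuous_on UNIV g" and per: "\<And>x. g (x + 2*pi) = g x"
  shows "integral {-pi..-pi + 2*pi*real n} g = real n * integral {-pi..pi} g"
proof (induction n)
  case 0
  then show ?case by simp
next
  case (Suc n)
  have int: "g integrable_on {a..b}" for a b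
    using cont by (intro integrable_continuous_real) (auto intro: continuous_on_subset)
  have per_n: "g (x + 2*pi*real k) = g x" for x k
  proof (induction k)
    case (Suc k)
    have "g (x + 2*pi*real (Suc k)) = g ((x + 2*pi*real k) + 2*pi)"
      by (simp add: algebra_simps)
    then show ?case using Suc per by simp
  qed simp
  have "integral {-pi..-pi + 2*pi*real (Suc n)} g =
      integral {-pi..-pi + 2*pi*real n} g + integral {-pi + 2*pi*real n..-pi + 2*pi*real (Suc n)} g"
    using Henstock_Kurzweil_Integration.integral_combine[of "-pi" "-pi + 2*pi*real n" "-pi + 2*pi*real (Suc n)" g] int pi_gt_zero
    by (auto simp: algebra_simps)
  also have "integral {-pi + 2*pi*real n..-pi + 2*pi*real (Suc n)} g
      = integral {-pi..pi} (\<lambda>x. g (x + 2*pi*real n))"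
    using integral_translate_real[of "-pi" "2*pi*real n" pi g] continuous_on_subset[OF cont subset_UNIV]
    by (simp add: algebra_simps)
  also have "\<dots> = integral {-pi..pi} g" using per_n by simp
  finally show ?case using Suc by (simp add: algebra_simps)
qed
lemma dini_aux:
  fixes f :: "real \<Rightarrow> real" and K c T :: real
  assumes K: "K \<ge> 0" and c: "c > 0" and cont: "continuous_on {0..} f" and f0: "f 0 \<le> 0"
    and step: "\<And>t \<epsilon>. t \<ge> 0 \<Longrightarrow> \<epsilon> > 0 \<Longrightarrow>
        \<exists>\<delta>>0. \<forall>h. 0 < h \<and> h < \<delta> \<longrightarrow> f (t + h) \<le> f t + h * (K * f t + \<epsilon>)"
    and T: "T \<ge> 0"
  shows "f T \<le> c * exp ((K + 1) * T)"
proof -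
  define \<phi> where "\<phi> s = c * exp ((K + 1) * s)" for s
  define A where "A = {\<tau> \<in> {0..T}. f \<tau> \<le> \<phi> \<tau>}"
  define S where "S = {s \<in> {0..T}. {0..s} \<subseteq> A}"
  have closedA: "closed A" unfolding A_def \<phi>_def
    by (intro continuous_on_closed_Collect_le continuous_on_subset[OF cont] continuous_intros) auto
  have "0 \<in> A" using f0 c T by (auto simp: A_def \<phi>_def)
  hence "0 \<in> S" using T by (auto simp: S_def)
  have SA: "S \<subseteq> A" by (auto simp: S_def)
  have bdd: "bdd_above S" by (auto simp: S_def bdd_above_def)
  define \<sigma> where "\<sigma> = Sup S"
  have "\<sigma> \<in> closure S" unfolding \<sigma>_def using \<open>0 \<in> S\<close> bdd by (intro closure_contains_Sup) auto
  hence "\<sigma> \<in> A" using closure_mono[OF SA] closedA by (simp add: closure_closed) blast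
  have sT: "\<sigma> \<le> T" unfolding \<sigma>_def using \<open>0 \<in> S\<close> by (intro cSup_least) (auto simp: S_def)
  have s0: "0 \<le> \<sigma>" unfolding \<sigma>_def using \<open>0 \<in> S\<close> bdd by (intro cSup_upper) auto
  have "{0..\<sigma>} \<subseteq> A"
  proof
    fix \<tau> assume \<tau>: "\<tau> \<in> {0..\<sigma>}"
    show "\<tau> \<in> A"
    proof (cases "\<tau> = \<sigma>")
      case True then show ?thesis using \<open>\<sigma> \<in> A\<close> by simp
    next
      case False
      hence "\<tau> < Sup S" using \<tau> by (auto simp: \<sigma>_def)
      then obtain s where "s \<in> S" "\<tau> < s" using less_cSup_iff[OF _ bdd] \<open>0 \<in> S\<close> by blast
      then show ?thesis using \<tau> by (auto simp: S_def)
    qed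
  qed
  have "\<sigma> = T"
  proof (rule ccontr)
    assume "\<sigma> \<noteq> T"
    hence lt: "\<sigma> < T" using sT by simp
    obtain \<delta> where \<delta>: "\<delta> > 0" "\<forall>h. 0 < h \<and> h < \<delta> \<longrightarrow> f (\<sigma> + h) \<le> f \<sigma> + h * (K * f \<sigma> + c/2)"
      using step[OF s0, of "c/2"] c by auto
    have fs: "f \<sigma> \<le> \<phi> \<sigma>" using \<open>\<sigma> \<in> A\<close> by (simp add: A_def)
    have phis: "\<phi> \<sigma> \<ge> c" using c s0 K by (simp add: \<phi>_def)
    define h' where "h' = min \<delta> (T - \<sigma>) / 2"
    have h': "0 < h'" "h' < \<delta>" "\<sigma> + h' \<le> T" using \<delta>(1) lt by (auto simp: h'_def min_def field_simps)
    have "{0..\<sigma> + h'} \<subseteq> A"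
    proof
      fix \<tau> assume \<tau>: "\<tau> \<in> {0..\<sigma> + h'}"
      show "\<tau> \<in> A"
      proof (cases "\<tau> \<le> \<sigma>")
        case True then show ?thesis using \<open>{0..\<sigma>} \<subseteq> A\<close> \<tau> by auto
      next
        case False
        define h where "h = \<tau> - \<sigma>"
        have h: "0 < h" "h < \<delta>" using False \<tau> h' by (auto simp: h_def)
        have "f \<tau> = f (\<sigma> + h)" by (simp add: h_def)
        also have "\<dots> \<le> f \<sigma> + h * (K * f \<sigma> + c/2)" using \<delta> h by auto
        also have "\<dots> \<le> \<phi> \<sigma> + h * (K * \<phi> \<sigma> + c/2)"
          using fs K h by (intro add_mono mult_left_mono) (auto intro: mult_left_mono)
        also have "\<dots> \<le> \<phi> \<sigma> * (1 + (K + 1) * h)"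
          using phis h c by (simp add: algebra_simps)
        also have "\<dots> \<le> \<phi> \<sigma> * exp ((K + 1) * h)"
          using phis c by (intro mult_left_mono exp_ge_add_one_self) auto
        also have "\<dots> = \<phi> \<tau>" by (simp add: \<phi>_def h_def mult_exp_exp algebra_simps)
        finally show ?thesis using \<tau> h' by (auto simp: A_def)
      qed
    qed
    hence "\<sigma> + h' \<in> S" using s0 h' by (auto simp: S_def)
    hence "\<sigma> + h' \<le> \<sigma>" unfolding \<sigma>_def using bdd by (intro cSup_upper) auto
    then show False using h' by simp
  qed
  then have "T \<in> A" using \<open>\<sigma> \<in> A\<close> by simp
  then show ?thesis by (simp add: A_def \<phi>_def)
qed

lemma dini:
  fixes f :: "real \<Rightarrow> real" and K T :: real
  assumes K: "K \<ge> 0" and cont: "continuous_on {0..} f" and f0: "f 0 \<le> 0"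
    and step: "\<And>t \<epsilon>. t \<ge> 0 \<Longrightarrow> \<epsilon> > 0 \<Longrightarrow>
        \<exists>\<delta>>0. \<forall>h. 0 < h \<and> h < \<delta> \<longrightarrow> f (t + h) \<le> f t + h * (K * f t + \<epsilon>)"
    and T: "T \<ge> 0"
  shows "f T \<le> 0"
proof (rule ccontr)
  assume "\<not> f T \<le> 0"
  define c where "c = f T / (2 * exp ((K + 1) * T))"
  have c: "c > 0" using \<open>\<not> f T \<le> 0\<close> by (simp add: c_def)
  from dini_aux[OF K c cont f0 step T] have "f T \<le> c * exp ((K + 1) * T)" by blast
  also have "\<dots> = f T / 2" by (simp add: c_def)
  finally show False using \<open>\<not> f T \<le> 0\<close> by simp
qed
lemma vd_step:
  fixes Z :: "real \<Rightarrow> 'a::real_normed_vector"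
  assumes "(Z has_vector_derivative Z') (at t within {0..})" "t \<ge> 0" "\<epsilon> > 0"
  shows "\<exists>d>0. \<forall>h. 0 < h \<and> h < d \<longrightarrow> norm (Z (t+h) - Z t - h *\<^sub>R Z') \<le> \<epsilon> * h"
proof -
  from assms(1)[unfolded has_vector_derivative_def has_derivative_within_alt] assms(3)
  obtain d where d: "d > 0" "\<forall>y\<in>{0..}. norm (y - t) < d \<longrightarrow> norm (Z y - Z t - (y - t) *\<^sub>R Z') \<le> \<epsilon> * norm (y - t)"
    by blast
  show ?thesis
  proof (intro exI[of _ d] conjI allI impI)
    fix h :: real assume h: "0 < h \<and> h < d"
    then show "norm (Z (t+h) - Z t - h *\<^sub>R Z') \<le> \<epsilon> * h"
      using d(2)[rule_format, of "t+h"] assms(2) by auto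
  qed (use d in auto)
qed

lemma cont_bcf:
  fixes F :: "real \<Rightarrow>\<^sub>C real"
  shows "continuous_on S g \<Longrightarrow> continuous_on S (\<lambda>x. apply_bcontfun F (g x))"
  by (rule continuous_on_compose2[OF continuous_on_apply_bcontfun[of UNIV F]]) auto

definition shiftC :: "real \<Rightarrow> (real \<Rightarrow>\<^sub>C real) \<Rightarrow> (real \<Rightarrow>\<^sub>C real)" where
  "shiftC c F = Bcontfun (\<lambda>x. F (x + c))"

lemma shiftC_apply[simp]: "apply_bcontfun (shiftC c F) x = F (x + c)"
proof -
  have "(\<lambda>x. F (x + c)) \<in> bcontfun"
    by (rule bcontfun_normI[where b="norm F"]) (auto intro!: cont_bcf continuous_intros simp: norm_bounded[of F, unfolded real_norm_def])
  then show ?thesis by (simp add: shiftC_def Bcontfun_inverse)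
qed

lemma shiftC_bounded_linear: "bounded_linear (shiftC c)"
proof (rule bounded_linear_intro[where K=1])
  show "shiftC c (x + y) = shiftC c x + shiftC c y" for x y by (rule bcontfun_eqI) simp
  show "shiftC c (r *\<^sub>R x) = r *\<^sub>R shiftC c x" for r x by (rule bcontfun_eqI) simp
  show "norm (shiftC c x) \<le> norm x * 1" for x by (simp, rule norm_bound) (simp add: norm_bounded[of x, unfolded real_norm_def])
qed

lemma ode_periodic:
  fixes e M :: real and U Y Y' :: "real \<Rightarrow> (real \<Rightarrow>\<^sub>C real)"
  assumes e: "e > 0" and M: "M > 0"
    and Ub: "\<And>t x. t \<ge> 0 \<Longrightarrow> \<bar>U t x\<bar> \<le> M"
    and Uper: "\<And>t x. t \<ge> 0 \<Longrightarrow> U t (x + 2*pi) = U t x"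
    and der: "\<And>t. t \<ge> 0 \<Longrightarrow> (Y has_vector_derivative Y' t) (at t within {0..})"
    and eq: "\<And>t x. t \<ge> 0 \<Longrightarrow> Y' t x = (1/e) * (Y t (x - e) * max 0 (U t (x - e))
                 - Y t x * \<bar>U t x\<bar> + Y t (x + e) * max 0 (- U t (x + e)))"
    and per0: "\<And>x. Y 0 (x + 2*pi) = Y 0 x"
    and T: "T \<ge> 0"
  shows "Y T (x + 2*pi) = Y T x"
proof -
  define Z where "Z t = shiftC (2*pi) (Y t) - Y t" for t
  define K where "K = 3 * M / e"
  have K: "K \<ge> 0" using e M by (simp add: K_def)
  have Zd: "(Z has_vector_derivative (shiftC (2*pi) (Y' t) - Y' t)) (at t within {0..})"
    if "t \<ge> 0" for t
    unfolding Z_def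
    by (rule has_vector_derivative_diff[OF
         bounded_linear.has_vector_derivative[OF shiftC_bounded_linear der[OF that]] der[OF that]])
  have Zb: "norm (shiftC (2*pi) (Y' t) - Y' t) \<le> K * norm (Z t)" if t: "t \<ge> 0" for t
  proof (rule norm_bound)
    fix x
    have z: "\<bar>Y t (y + 2*pi) - Y t y\<bar> \<le> norm (Z t)" for y
      using norm_bounded[of "Z t" y] by (simp add: Z_def)
    define A where "A = Y t (x + 2*pi - e) - Y t (x - e)"
    define B where "B = Y t (x + 2*pi) - Y t x"
    define C where "C = Y t (x + 2*pi + e) - Y t (x + e)"
    define a where "a = max 0 (U t (x - e))"
    define b where "b = \<bar>U t x\<bar>"
    define c where "c = max 0 (- U t (x + e))"
    have u1: "U t (x + 2*pi - e) = U t (x - e)" using Uper[OF t, of "x - e"] by (simp add: algebra_simps)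
    have u2: "U t (x + 2*pi + e) = U t (x + e)" using Uper[OF t, of "x + e"] by (simp add: algebra_simps)
    have u3: "U t (x + 2*pi) = U t x" using Uper[OF t, of x] by simp
    have e1: "Y' t (x + 2*pi) = (1/e) * (Y t (x + 2*pi - e) * a - Y t (x + 2*pi) * b + Y t (x + 2*pi + e) * c)"
      using eq[OF t, of "x + 2*pi"] u1 u2 u3 by (simp add: a_def[symmetric] b_def[symmetric] c_def[symmetric])
    have e2: "Y' t x = (1/e) * (Y t (x - e) * a - Y t x * b + Y t (x + e) * c)"
      using eq[OF t, of x] by (simp add: a_def[symmetric] b_def[symmetric] c_def[symmetric])
    have "apply_bcontfun (shiftC (2*pi) (Y' t) - Y' t) x = Y' t (x + 2*pi) - Y' t x" by simp
    also have "\<dots> = (1/e) * (A * a - B * b + C * c)"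
      unfolding e1 e2 A_def B_def C_def by (simp only: right_diff_distrib[symmetric] left_diff_distrib[symmetric]) (simp add: algebra_simps)
    finally have eqx: "apply_bcontfun (shiftC (2*pi) (Y' t) - Y' t) x = (1/e) * (A * a - B * b + C * c)" .
    have A: "\<bar>A\<bar> \<le> norm (Z t)" using z[of "x - e"] by (simp add: A_def algebra_simps)
    have B: "\<bar>B\<bar> \<le> norm (Z t)" using z[of x] by (simp add: B_def)
    have C: "\<bar>C\<bar> \<le> norm (Z t)" using z[of "x + e"] by (simp add: C_def algebra_simps)
    have ub: "\<bar>U t y\<bar> \<le> M" for y using Ub[OF t] .
    have a: "\<bar>a\<bar> \<le> M" using ub[of "x - e"] M by (simp add: a_def max_def abs_le_iff)
    have b: "\<bar>b\<bar> \<le> M" using ub[of x] by (simp add: b_def)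
    have c: "\<bar>c\<bar> \<le> M" using ub[of "x + e"] M by (simp add: c_def max_def abs_le_iff)
    have "\<bar>A * a - B * b + C * c\<bar> \<le> \<bar>A\<bar> * \<bar>a\<bar> + \<bar>B\<bar> * \<bar>b\<bar> + \<bar>C\<bar> * \<bar>c\<bar>"
      using abs_triangle_ineq[of "A * a - B * b" "C * c"] abs_triangle_ineq4[of "A * a" "B * b"]
      unfolding abs_mult by linarith
    also have "\<dots> \<le> norm (Z t) * M + norm (Z t) * M + norm (Z t) * M"
      by (intro add_mono mult_mono A B C a b c) auto
    finally have "\<bar>(1/e) * (A * a - B * b + C * c)\<bar> \<le> (1/e) * (norm (Z t) * M + norm (Z t) * M + norm (Z t) * M)"
      using e by (simp add: abs_mult divide_right_mono)
    then have "\<bar>apply_bcontfun (shiftC (2*pi) (Y' t) - Y' t) x\<bar> \<le> (1/e) * (norm (Z t) * M + norm (Z t) * M + norm (Z t) * M)"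
      by (simp only: eqx)
    also have "\<dots> = K * norm (Z t)" using e by (simp add: K_def field_simps)
    finally show "norm (apply_bcontfun (shiftC (2*pi) (Y' t) - Y' t) x) \<le> K * norm (Z t)"
      by simp
  qed
  have "norm (Z T) \<le> 0"
  proof (rule dini[OF K, where f="\<lambda>t. norm (Z t)"])
    show "continuous_on {0..} (\<lambda>t. norm (Z t))"
      by (intro continuous_on_norm continuous_on_vector_derivative) (use Zd in auto)
    have "Z 0 = 0" by (rule bcontfun_eqI) (simp add: Z_def per0)
    then show "norm (Z 0) \<le> 0" by simp
    show "T \<ge> 0" by fact
    fix t \<epsilon> :: real assume t: "t \<ge> 0" and \<epsilon>: "\<epsilon> > 0"
    obtain d where d: "d > 0" "\<forall>h. 0 < h \<and> h < d \<longrightarrow>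
        norm (Z (t+h) - Z t - h *\<^sub>R (shiftC (2*pi) (Y' t) - Y' t)) \<le> \<epsilon> * h"
      using vd_step[OF Zd[OF t] t \<epsilon>] by blast
    show "\<exists>\<delta>>0. \<forall>h. 0 < h \<and> h < \<delta> \<longrightarrow> norm (Z (t + h)) \<le> norm (Z t) + h * (K * norm (Z t) + \<epsilon>)"
    proof (intro exI[of _ d] conjI allI impI)
      fix h :: real assume h: "0 < h \<and> h < d"
      define D where "D = shiftC (2*pi) (Y' t) - Y' t"
      have eqz: "Z (t+h) = (Z t + h *\<^sub>R D) + (Z (t+h) - Z t - h *\<^sub>R D)" by simp
      have n1: "norm (Z (t+h)) \<le> norm (Z t + h *\<^sub>R D) + norm (Z (t+h) - Z t - h *\<^sub>R D)"
        by (subst eqz) (rule norm_triangle_ineq)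
      have n2: "norm (Z t + h *\<^sub>R D) \<le> norm (Z t) + norm (h *\<^sub>R D)" by (rule norm_triangle_ineq)
      have "norm (Z (t+h)) \<le> norm (Z t) + norm (h *\<^sub>R (shiftC (2*pi) (Y' t) - Y' t))
          + norm (Z (t+h) - Z t - h *\<^sub>R (shiftC (2*pi) (Y' t) - Y' t))"
        using n1 n2 unfolding D_def by linarith
      also have "\<dots> \<le> norm (Z t) + h * (K * norm (Z t)) + \<epsilon> * h"
        using h d(2) Zb[OF t] by (intro add_mono) (auto intro: mult_left_mono)
      finally show "norm (Z (t + h)) \<le> norm (Z t) + h * (K * norm (Z t) + \<epsilon>)"
        by (simp add: algebra_simps)
    qed (use d in auto)
  qed
  then have "Z T = 0" by simp
  then have "apply_bcontfun (Z T) x = 0" by simp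
  then show ?thesis by (simp add: Z_def)
qed
lemma euler_L1:
  fixes y u :: "real \<Rightarrow> real" and e M h :: real
  assumes e: "e > 0" "e \<le> 2*pi" and M: "M > 0" and h: "0 \<le> h" "h \<le> e / M"
    and yc: "continuous_on UNIV y" and uc: "continuous_on UNIV u"
    and yp: "\<And>x. y (x + 2*pi) = y x" and up: "\<And>x. u (x + 2*pi) = u x"
    and ub: "\<And>x. \<bar>u x\<bar> \<le> M"
  shows "integral {-pi..pi} (\<lambda>x. \<bar>y x + h * ((1/e) * (y (x - e) * max 0 (u (x - e))
                 - y x * \<bar>u x\<bar> + y (x + e) * max 0 (- u (x + e))))\<bar>)
         \<le> integral {-pi..pi} (\<lambda>x. \<bar>y x\<bar>)"
proof -
  define q where "q = h / e"
  have q: "0 \<le> q" "q * M \<le> 1" using h e M by (auto simp: q_def field_simps)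
  define g1 where "g1 x = \<bar>y x\<bar> * max 0 (u x)" for x
  define g2 where "g2 x = \<bar>y x\<bar> * max 0 (- u x)" for x
  have g1c: "continuous_on UNIV g1" unfolding g1_def by (intro continuous_intros yc uc)
  have g2c: "continuous_on UNIV g2" unfolding g2_def by (intro continuous_intros yc uc)
  have g1p: "g1 (x + 2*pi) = g1 x" for x by (simp add: g1_def yp up)
  have g2p: "g2 (x + 2*pi) = g2 x" for x by (simp add: g2_def yp up)
  have intc: "continuous_on UNIV f \<Longrightarrow> (f has_integral integral {a..b} f) {a..b}" for f :: "real \<Rightarrow> real" and a b
    by (rule integrable_integral, rule integrable_continuous_real, erule continuous_on_subset) auto
  define N where "N = integral {-pi..pi} (\<lambda>x. \<bar>y x\<bar>)"
  define I1 where "I1 = integral {-pi..pi} g1"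
  define I2 where "I2 = integral {-pi..pi} g2"
  have H1: "((\<lambda>x. \<bar>y x\<bar>) has_integral N) {-pi..pi}" unfolding N_def
    by (rule intc) (intro continuous_intros yc)
  have H2: "(g1 has_integral I1) {-pi..pi}" unfolding I1_def by (rule intc[OF g1c])
  have H3: "(g2 has_integral I2) {-pi..pi}" unfolding I2_def by (rule intc[OF g2c])
  have H4: "((\<lambda>x. g1 (x + - e)) has_integral I1) {-pi..pi}"
  proof -
    have "integral {-pi..pi} (\<lambda>x. g1 (x + - e)) = integral {-pi + - e..pi + - e} g1"
      by (rule integral_translate_real) (rule continuous_on_subset[OF g1c], auto)
    also have "\<dots> = I1" unfolding I1_def
      using periodic_integral[OF g1c g1p, of "-pi - e"] e by (simp add: algebra_simps)
    finally show ?thesis using intc[of "\<lambda>x. g1 (x + - e)" "-pi" pi]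
      by (simp add: continuous_on_compose2[OF g1c] continuous_intros)
  qed
  have H5: "((\<lambda>x. g2 (x + e)) has_integral I2) {-pi..pi}"
  proof -
    have "integral {-pi..pi} (\<lambda>x. g2 (x + e)) = integral {-pi + e..pi + e} g2"
      by (rule integral_translate_real) (rule continuous_on_subset[OF g2c], auto)
    also have "\<dots> = I2" unfolding I2_def
      using periodic_integral[OF g2c g2p, of "-pi + e"] e by (simp add: algebra_simps)
    finally show ?thesis using intc[of "\<lambda>x. g2 (x + e)" "-pi" pi]
      by (simp add: continuous_on_compose2[OF g2c] continuous_intros)
  qed
  define b where "b x = \<bar>y x\<bar> - q * (g1 x + g2 x) + q * g1 (x + - e) + q * g2 (x + e)" for x
  have Hb: "(b has_integral (N - q * (I1 + I2) + q * I1 + q * I2)) {-pi..pi}"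
    unfolding b_def
    by (intro has_integral_add has_integral_diff has_integral_mult_right H1 H2 H3 H4 H5)
  have absu: "\<bar>u x\<bar> = max 0 (u x) + max 0 (- u x)" for x by (simp add: max_def)
  have pw: "\<bar>y x + h * ((1/e) * (y (x - e) * max 0 (u (x - e))
                 - y x * \<bar>u x\<bar> + y (x + e) * max 0 (- u (x + e))))\<bar> \<le> b x" for x
  proof -
    have hq: "h * (1/e) = q" by (simp add: q_def)
    have eqn: "y x + h * ((1/e) * (y (x - e) * max 0 (u (x - e))
                 - y x * \<bar>u x\<bar> + y (x + e) * max 0 (- u (x + e))))
        = y x * (1 - q * \<bar>u x\<bar>) + q * (y (x - e) * max 0 (u (x - e)))
          + q * (y (x + e) * max 0 (- u (x + e)))"
      by (simp add: hq[symmetric] algebra_simps)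
    have nn: "0 \<le> 1 - q * \<bar>u x\<bar>"
      using q ub[of x] mult_left_mono[OF ub[of x] q(1)] by linarith
    have "\<bar>y x * (1 - q * \<bar>u x\<bar>) + q * (y (x - e) * max 0 (u (x - e)))
          + q * (y (x + e) * max 0 (- u (x + e)))\<bar>
        \<le> \<bar>y x\<bar> * (1 - q * \<bar>u x\<bar>) + q * (\<bar>y (x - e)\<bar> * max 0 (u (x - e)))
          + q * (\<bar>y (x + e)\<bar> * max 0 (- u (x + e)))"
      using nn q(1)
      by (intro order.trans[OF abs_triangle_ineq] add_mono order.trans[OF abs_triangle_ineq])
        (auto simp: abs_mult)
    also have "\<dots> = b x"
      by (simp add: b_def g1_def g2_def absu[of x] algebra_simps)
    finally show ?thesis by (simp only: eqn)
  qed
  have "integral {-pi..pi} (\<lambda>x. \<bar>y x + h * ((1/e) * (y (x - e) * max 0 (u (x - e))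
                 - y x * \<bar>u x\<bar> + y (x + e) * max 0 (- u (x + e))))\<bar>) \<le> integral {-pi..pi} b"
  proof (rule Henstock_Kurzweil_Integration.integral_le)
    show "b integrable_on {-pi..pi}" using Hb by blast
    show "(\<lambda>x. \<bar>y x + h * ((1/e) * (y (x - e) * max 0 (u (x - e))
                 - y x * \<bar>u x\<bar> + y (x + e) * max 0 (- u (x + e))))\<bar>) integrable_on {-pi..pi}"
      by (intro integrable_continuous_real continuous_intros continuous_on_compose2[OF yc]
          continuous_on_compose2[OF uc]) auto
  qed (rule pw)
  also have "integral {-pi..pi} b = N" using integral_unique[OF Hb] by (simp add: algebra_simps)
  finally show ?thesis by (simp add: N_def)
qed
definition Nf :: "(real \<Rightarrow>\<^sub>C real) \<Rightarrow> real" where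
  "Nf F = integral {-pi..pi} (\<lambda>x. \<bar>F x\<bar>)"

lemma Nf_le: "Nf F \<le> Nf G + 2*pi * norm (F - G)"
proof -
  have "Nf F \<le> integral {-pi..pi} (\<lambda>x. \<bar>G x\<bar> + norm (F - G))"
    unfolding Nf_def
  proof (rule Henstock_Kurzweil_Integration.integral_le)
    fix x
    have "\<bar>F x - G x\<bar> \<le> norm (F - G)" using norm_bounded[of "F - G" x] by simp
    then show "\<bar>F x\<bar> \<le> \<bar>G x\<bar> + norm (F - G)" by linarith
  qed (auto intro!: integrable_continuous_real continuous_intros)
  also have "\<dots> = Nf G + 2*pi * norm (F - G)"
    unfolding Nf_def
    by (subst Henstock_Kurzweil_Integration.integral_add)
       (auto intro!: integrable_continuous_real continuous_intros)
  finally show ?thesis .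
qed

lemma Nf_cont: "continuous_on UNIV Nf"
proof (rule lipschitz_on_continuous_on)
  show "(2*pi)-lipschitz_on UNIV Nf"
  proof (rule lipschitz_onI)
    fix F G :: "real \<Rightarrow>\<^sub>C real"
    have "Nf F - Nf G \<le> 2*pi * norm (F - G)" "Nf G - Nf F \<le> 2*pi * norm (G - F)"
      using Nf_le[of F G] Nf_le[of G F] by auto
    then show "dist (Nf F) (Nf G) \<le> 2*pi * dist F G"
      by (simp add: dist_norm norm_minus_commute abs_le_iff)
  qed simp
qed

lemma ode_L1:
  fixes e M :: real and U Y Y' :: "real \<Rightarrow> (real \<Rightarrow>\<^sub>C real)"
  assumes e: "e > 0" "e \<le> 2*pi" and M: "M > 0"
    and Ub: "\<And>t x. t \<ge> 0 \<Longrightarrow> \<bar>U t x\<bar> \<le> M"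
    and Uper: "\<And>t x. t \<ge> 0 \<Longrightarrow> U t (x + 2*pi) = U t x"
    and der: "\<And>t. t \<ge> 0 \<Longrightarrow> (Y has_vector_derivative Y' t) (at t within {0..})"
    and eq: "\<And>t x. t \<ge> 0 \<Longrightarrow> Y' t x = (1/e) * (Y t (x - e) * max 0 (U t (x - e))
                 - Y t x * \<bar>U t x\<bar> + Y t (x + e) * max 0 (- U t (x + e)))"
    and per0: "\<And>x. Y 0 (x + 2*pi) = Y 0 x"
    and T: "T \<ge> 0"
  shows "Nf (Y T) \<le> Nf (Y 0)"
proof -
  have per: "Y t (x + 2*pi) = Y t x" if "t \<ge> 0" for t x
    by (rule ode_periodic[OF e(1) M Ub Uper der eq per0 that])
  have "Nf (Y T) - Nf (Y 0) \<le> 0"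
  proof (rule dini[where K=0 and f="\<lambda>t. Nf (Y t) - Nf (Y 0)"])
    show "continuous_on {0..} (\<lambda>t. Nf (Y t) - Nf (Y 0))"
      by (intro continuous_intros continuous_on_compose2[OF Nf_cont]
          continuous_on_vector_derivative) (use der in auto)
    fix t \<epsilon> :: real assume t: "t \<ge> 0" and \<epsilon>: "\<epsilon> > 0"
    obtain d where d: "d > 0" "\<forall>h. 0 < h \<and> h < d \<longrightarrow>
        norm (Y (t+h) - Y t - h *\<^sub>R Y' t) \<le> (\<epsilon> / (2*pi)) * h"
      using vd_step[OF der[OF t] t, of "\<epsilon> / (2*pi)"] \<epsilon> by auto
    show "\<exists>\<delta>>0. \<forall>h. 0 < h \<and> h < \<delta> \<longrightarrow>
        Nf (Y (t + h)) - Nf (Y 0) \<le> Nf (Y t) - Nf (Y 0) + h * (0 * (Nf (Y t) - Nf (Y 0)) + \<epsilon>)"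
    proof (intro exI[of _ "min d (e / M)"] conjI allI impI)
      fix h :: real assume h: "0 < h \<and> h < min d (e / M)"
      have "Nf (Y (t+h)) \<le> Nf (Y t + h *\<^sub>R Y' t) + 2*pi * norm (Y (t+h) - (Y t + h *\<^sub>R Y' t))"
        by (rule Nf_le)
      also have "2*pi * norm (Y (t+h) - (Y t + h *\<^sub>R Y' t)) \<le> 2*pi * ((\<epsilon> / (2*pi)) * h)"
        using d(2) h by (intro mult_left_mono) (auto simp: algebra_simps)
      also have "2*pi * ((\<epsilon> / (2*pi)) * h) = \<epsilon> * h" by simp
      also have "Nf (Y t + h *\<^sub>R Y' t) \<le> Nf (Y t)"
      proof -
        have "Nf (Y t + h *\<^sub>R Y' t) = integral {-pi..pi} (\<lambda>x. \<bar>Y t x + h * ((1/e) *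
            (Y t (x - e) * max 0 (U t (x - e)) - Y t x * \<bar>U t x\<bar> + Y t (x + e) * max 0 (- U t (x + e))))\<bar>)"
          unfolding Nf_def by (simp add: eq[OF t])
        also have "\<dots> \<le> integral {-pi..pi} (\<lambda>x. \<bar>Y t x\<bar>)"
          apply (rule euler_L1[OF e M])
          using h apply linarith
          using h apply linarith
          apply simp
          apply simp
          apply (rule per[OF t])
          apply (rule Uper[OF t])
          apply (rule Ub[OF t])
          done
        finally show ?thesis by (simp add: Nf_def)
      qed
      finally show "Nf (Y (t + h)) - Nf (Y 0) \<le> Nf (Y t) - Nf (Y 0) + h * (0 * (Nf (Y t) - Nf (Y 0)) + \<epsilon>)"
        by (simp add: algebra_simps)
    qed (use d e M in auto)
  qed (use T in auto)
  then show ?thesis by simp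
qed
lemma deriv_zero_outside:
  fixes g g' :: "real \<Rightarrow> real"
  assumes d: "\<And>x. (g has_real_derivative g' x) (at x)"
    and z: "\<And>x. \<bar>x\<bar> > R \<Longrightarrow> g x = 0" and x: "\<bar>x\<bar> > R"
  shows "g' x = 0"
proof -
  have "((\<lambda>_. 0) has_real_derivative g' x) (at x)"
    by (rule has_field_derivative_transform_within_open[OF d, of "{x. \<bar>x\<bar> > R}"])
       (use x z in \<open>auto intro!: open_Collect_less continuous_intros\<close>)
  then show ?thesis using DERIV_unique[OF _ DERIV_const] by blast
qed

lemma bounded_outside:
  fixes g :: "real \<Rightarrow> real"
  assumes c: "continuous_on UNIV g" and z: "\<And>x. \<bar>x\<bar> > R \<Longrightarrow> g x = 0"
  shows "\<exists>B\<ge>0. \<forall>x. \<bar>g x\<bar> \<le> B"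
proof -
  have "bounded (g ` {-R..R})"
    by (intro compact_imp_bounded compact_continuous_image continuous_on_subset[OF c]) auto
  then obtain a where a: "\<forall>y\<in>g ` {-R..R}. norm y \<le> a" by (auto simp: bounded_iff)
  show ?thesis
  proof (intro exI[of _ "max a 0"] conjI allI)
    fix x show "\<bar>g x\<bar> \<le> max a 0"
    proof (cases "\<bar>x\<bar> > R")
      case False then have "x \<in> {-R..R}" by auto
      then have "norm (g x) \<le> a" using a by blast
      then show ?thesis by simp
    qed (use z in auto)
  qed simp
qed

lemma lipschitz_deriv:
  fixes g g1 :: "real \<Rightarrow> real"
  assumes d: "\<And>x. (g has_real_derivative g1 x) (at x)" and b: "\<And>z. \<bar>g1 z\<bar> \<le> P"
  shows "\<bar>g y - g x\<bar> \<le> P * \<bar>y - x\<bar>"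
  using field_differentiable_bound[of UNIV g g1 P y x] d b
  by (auto simp: has_field_derivative_at_within)

lemma taylor_bound:
  fixes g g1 g2 :: "real \<Rightarrow> real"
  assumes d1: "\<And>x. (g has_real_derivative g1 x) (at x)"
    and d2: "\<And>x. (g1 has_real_derivative g2 x) (at x)"
    and b: "\<And>z. \<bar>g2 z\<bar> \<le> P"
  shows "\<bar>g (x + s) - g x - s * g1 x\<bar> \<le> s\<^sup>2 * P"
proof -
  define S where "S = {min x (x+s)..max x (x+s)}"
  define h where "h z = g z - z * g1 x" for z
  have hd: "(h has_real_derivative (g1 z - g1 x)) (at z within S)" for z
    unfolding h_def by (rule has_field_derivative_at_within) (auto intro!: derivative_eq_intros d1)
  have hb: "\<bar>g1 z - g1 x\<bar> \<le> \<bar>s\<bar> * P" if "z \<in> S" for z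
  proof -
    have "\<bar>g1 z - g1 x\<bar> \<le> P * \<bar>z - x\<bar>" by (rule lipschitz_deriv[OF d2 b])
    also have "\<dots> \<le> P * \<bar>s\<bar>"
      using that b[of 0] by (intro mult_left_mono) (auto simp: S_def abs_if min_def max_def split: if_splits)
    finally show ?thesis by (simp add: mult.commute)
  qed
  have "norm (h (x + s) - h x) \<le> (\<bar>s\<bar> * P) * norm ((x + s) - x)"
    by (rule field_differentiable_bound[of S h "\<lambda>z. g1 z - g1 x"])
       (use hd hb in \<open>auto simp: S_def\<close>)
  then show ?thesis by (simp add: h_def algebra_simps power2_eq_square abs_mult)
qed

lemma smooth_cont: "smooth_fun f \<Longrightarrow> continuous_on UNIV f"
  unfolding smooth_fun_def
  by (metis DERIV_isCont continuous_at_imp_continuous_on)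

lemma compact_supp_R:
  assumes "compact_supp f"
  shows "\<exists>R>0. \<forall>x. \<bar>x\<bar> > R \<longrightarrow> f x = 0"
proof -
  have "bounded (closure {x. f x \<noteq> 0})" using assms compact_imp_bounded by (auto simp: compact_supp_def)
  then obtain a where a: "\<forall>x\<in>closure {x. f x \<noteq> 0}. norm x \<le> a" by (auto simp: bounded_iff)
  show ?thesis
  proof (intro exI[of _ "max a 1"] conjI allI impI)
    fix x :: real assume "\<bar>x\<bar> > max a 1"
    then show "f x = 0" using a closure_subset[of "{x. f x \<noteq> 0}"] by force
  qed simp
qed
definition moll_ok :: "(real \<Rightarrow> real) \<Rightarrow> real \<Rightarrow> bool" where
  "moll_ok \<phi> r \<longleftrightarrow> continuous_on UNIV \<phi> \<and> r > 0 \<and> (\<forall>z. \<bar>z\<bar> > r \<longrightarrow> \<phi> z = 0)"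

lemma moll_zero:
  assumes "moll_ok \<phi> r" "a > 0" "\<bar>z\<bar> > a * r"
  shows "mollifier a \<phi> z = 0"
proof -
  have "\<bar>z / a\<bar> > r" using assms by (simp add: field_simps abs_divide)
  then show ?thesis using assms by (simp add: mollifier_def moll_ok_def)
qed

lemma moll_cont:
  assumes "moll_ok \<phi> r"
  shows "continuous_on UNIV (mollifier a \<phi>)"
proof -
  have "continuous_on UNIV (\<lambda>z. \<phi> (z * inverse a) * inverse a)"
    using assms by (auto simp: moll_ok_def intro!: continuous_intros continuous_on_compose2[of UNIV \<phi>])
  then show ?thesis unfolding mollifier_def by (simp add: divide_inverse)
qed

lemma moll_cont':
  assumes "moll_ok \<phi> r" "continuous_on S g"
  shows "continuous_on S (\<lambda>x. mollifier a \<phi> (g x))"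
  using continuous_on_compose2[OF moll_cont[OF assms(1)] assms(2)] by auto

lemma conv_box:
  assumes ok: "moll_ok \<phi> r" and a: "a > 0" and F: "continuous_on UNIV F"
    and cd: "c \<le> x - a * r" "x + a * r \<le> d"
  shows "conv F (mollifier a \<phi>) x = integral {c..d} (\<lambda>y. F y * mollifier a \<phi> (x - y))"
proof -
  have "conv F (mollifier a \<phi>) x = integral UNIV (\<lambda>y. if y \<in> {c..d} then F y * mollifier a \<phi> (x - y) else 0)"
    unfolding conv_def
  proof (rule arg_cong[where f="integral UNIV"], rule ext)
    fix y show "F y * mollifier a \<phi> (x - y) = (if y \<in> {c..d} then F y * mollifier a \<phi> (x - y) else 0)"
    proof (cases "y \<in> {c..d}")
      case False
      then have "\<bar>x - y\<bar> > a * r" using cd by auto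
      then show ?thesis using moll_zero[OF ok a] False by simp
    qed simp
  qed
  also have "\<dots> = integral {c..d} (\<lambda>y. F y * mollifier a \<phi> (x - y))"
    by (rule integral_restrict_UNIV)
  finally show ?thesis .
qed

lemma conv_shift:
  assumes ok: "moll_ok \<phi> r" and a: "a > 0" and F: "continuous_on UNIV F"
  shows "conv (\<lambda>y. F (y + s)) (mollifier a \<phi>) x = conv F (mollifier a \<phi>) (x + s)"
proof -
  have Fs: "continuous_on UNIV (\<lambda>y. F (y + s))"
    by (rule continuous_on_compose2[OF F]) (auto intro: continuous_intros)
  have "conv (\<lambda>y. F (y + s)) (mollifier a \<phi>) x
      = integral {x - a*r..x + a*r} (\<lambda>y. F (y + s) * mollifier a \<phi> (x - y))"
    by (rule conv_box[OF ok a Fs]) auto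
  also have "\<dots> = integral {x - a*r..x + a*r} (\<lambda>y. (\<lambda>z. F z * mollifier a \<phi> (x + s - z)) (y + s))"
    by (simp add: algebra_simps)
  also have "\<dots> = integral {x - a*r + s..x + a*r + s} (\<lambda>z. F z * mollifier a \<phi> (x + s - z))"
    by (rule integral_translate_real)
       (intro continuous_intros continuous_on_subset[OF F] moll_cont'[OF ok], auto)
  also have "\<dots> = conv F (mollifier a \<phi>) (x + s)"
    by (rule conv_box[OF ok a F, symmetric]) auto
  finally show ?thesis .
qed

lemma conv_lin3:
  assumes ok: "moll_ok \<phi> r" and a: "a > 0"
    and F: "continuous_on UNIV F" and G: "continuous_on UNIV G" and H: "continuous_on UNIV H"
  shows "conv (\<lambda>y. p * F y + q * G y + w * H y) (mollifier a \<phi>) x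
      = p * conv F (mollifier a \<phi>) x + q * conv G (mollifier a \<phi>) x + w * conv H (mollifier a \<phi>) x"
proof -
  let ?I = "{x - a*r..x + a*r}"
  have c: "continuous_on UNIV K \<Longrightarrow> (\<lambda>y. K y * mollifier a \<phi> (x - y)) integrable_on ?I" for K
    by (intro integrable_continuous_real continuous_intros moll_cont'[OF ok]) (auto intro: continuous_on_subset)
  have "conv (\<lambda>y. p * F y + q * G y + w * H y) (mollifier a \<phi>) x
      = integral ?I (\<lambda>y. (p * F y + q * G y + w * H y) * mollifier a \<phi> (x - y))"
    by (rule conv_box[OF ok a]) (auto intro!: continuous_intros F G H)
  also have "\<dots> = integral ?I (\<lambda>y. p * (F y * mollifier a \<phi> (x - y)) + q * (G y * mollifier a \<phi> (x - y))
       + w * (H y * mollifier a \<phi> (x - y)))"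
    by (simp add: algebra_simps)
  also have "\<dots> = p * integral ?I (\<lambda>y. F y * mollifier a \<phi> (x - y)) + q * integral ?I (\<lambda>y. G y * mollifier a \<phi> (x - y))
       + w * integral ?I (\<lambda>y. H y * mollifier a \<phi> (x - y))"
    by (intro integral_unique has_integral_add has_integral_mult_right integrable_integral c F G H)
  also have "\<dots> = p * conv F (mollifier a \<phi>) x + q * conv G (mollifier a \<phi>) x + w * conv H (mollifier a \<phi>) x"
    using conv_box[OF ok a F, of "x - a*r" x "x + a*r"] conv_box[OF ok a G, of "x - a*r" x "x + a*r"]
      conv_box[OF ok a H, of "x - a*r" x "x + a*r"] by simp
  finally show ?thesis .
qed

lemma conv_cont:
  assumes ok: "moll_ok \<phi> r" and a: "a > 0" and F: "continuous_on UNIV F"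
  shows "continuous_on UNIV (conv F (mollifier a \<phi>))"
proof -
  have "isCont (conv F (mollifier a \<phi>)) x0" for x0
  proof -
    let ?J = "{x0 - 1..x0 + 1}"
    have "continuous_on ?J (\<lambda>x. integral {x0 - 1 - a*r..x0 + 1 + a*r} (\<lambda>y. F y * mollifier a \<phi> (x - y)))"
    proof (rule integral_continuous_on_param[where a="x0 - 1 - a*r" and b="x0 + 1 + a*r", simplified])
      have "continuous_on (?J \<times> {x0 - 1 - a*r..x0 + 1 + a*r}) (\<lambda>z. F (snd z) * mollifier a \<phi> (fst z - snd z))"
        by (intro continuous_intros continuous_on_compose2[OF F] moll_cont'[OF ok]) auto
      then show "continuous_on (?J \<times> {x0 - 1 - a*r..x0 + 1 + a*r}) (\<lambda>(x, y). F y * mollifier a \<phi> (x - y))"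
        by (simp add: case_prod_beta)
    qed
    then have "continuous_on ?J (conv F (mollifier a \<phi>))"
      by (rule continuous_on_eq) (rule conv_box[OF ok a F, symmetric], auto)
    then show ?thesis
      by (rule continuous_on_interior) (auto simp: interior_atLeastAtMost_real)
  qed
  then show ?thesis by (simp add: continuous_at_imp_continuous_on)
qed
lemma not_bot_within_Ici: "t \<ge> (0::real) \<Longrightarrow> at t within {0..} \<noteq> bot"
proof
  assume t: "t \<ge> 0" and b: "at t within {0..} = bot"
  have "at_right t \<le> at t within {0..}" using t by (intro at_le) auto
  then have "at_right t = bot" using b by (simp add: bot_unique)
  then show False using trivial_limit_at_right_real by simp
qed

lemma vd_conv:
  fixes X :: "real \<Rightarrow> (real \<Rightarrow>\<^sub>C real)"
  assumes ok: "moll_ok \<phi> r" and a: "a > 0"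
    and der: "(X has_vector_derivative Xd) (at t within {0..})" and t: "t \<ge> 0"
  shows "vector_derivative (\<lambda>s. conv (\<lambda>y. X s y) (mollifier a \<phi>) x) (at t within {0..})
       = conv (\<lambda>y. Xd y) (mollifier a \<phi>) x"
proof -
  let ?I = "{x - a*r..x + a*r}"
  define L where "L F = integral ?I (\<lambda>y. apply_bcontfun F y * mollifier a \<phi> (x - y))" for F
  have c: "(\<lambda>y. apply_bcontfun F y * mollifier a \<phi> (x - y)) integrable_on ?I" for F
    by (auto intro!: integrable_continuous_real continuous_intros moll_cont'[OF ok])
  have cm: "(\<lambda>y. \<bar>mollifier a \<phi> (x - y)\<bar>) integrable_on ?I"
    by (auto intro!: integrable_continuous_real continuous_intros moll_cont'[OF ok])
  have conv_L: "conv (\<lambda>y. apply_bcontfun F y) (mollifier a \<phi>) x = L F" for F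
    unfolding L_def by (rule conv_box[OF ok a]) auto
  have bl: "bounded_linear L"
  proof (rule bounded_linear_intro[where K="integral ?I (\<lambda>y. \<bar>mollifier a \<phi> (x - y)\<bar>)"])
    fix F G :: "real \<Rightarrow>\<^sub>C real" and k :: real
    have "L (F + G) = integral ?I (\<lambda>y. apply_bcontfun F y * mollifier a \<phi> (x - y)
        + apply_bcontfun G y * mollifier a \<phi> (x - y))"
      unfolding L_def by (simp add: distrib_right)
    also have "\<dots> = L F + L G"
      unfolding L_def by (rule Henstock_Kurzweil_Integration.integral_add[OF c c])
    finally show "L (F + G) = L F + L G" .
    have "L (k *\<^sub>R F) = integral ?I (\<lambda>y. k * (apply_bcontfun F y * mollifier a \<phi> (x - y)))"
      unfolding L_def by (simp add: mult.assoc)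
    also have "\<dots> = k * L F"
      unfolding L_def by (rule integral_mult[OF c, symmetric])
    finally show "L (k *\<^sub>R F) = k *\<^sub>R L F" by simp
    have "norm (L F) \<le> integral ?I (\<lambda>y. norm F * \<bar>mollifier a \<phi> (x - y)\<bar>)"
      unfolding L_def
    proof (rule integral_norm_bound_integral[OF c])
      show "(\<lambda>y. norm F * \<bar>mollifier a \<phi> (x - y)\<bar>) integrable_on ?I"
        by (rule integrable_on_mult_right[OF cm])
      fix y
      show "norm (apply_bcontfun F y * mollifier a \<phi> (x - y)) \<le> norm F * \<bar>mollifier a \<phi> (x - y)\<bar>"
        using norm_bounded[of F y] by (simp add: abs_mult mult_right_mono)
    qed
    also have "\<dots> = norm F * integral ?I (\<lambda>y. \<bar>mollifier a \<phi> (x - y)\<bar>)"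
      by (rule integral_mult[OF cm, symmetric])
    finally show "norm (L F) \<le> norm F * integral ?I (\<lambda>y. \<bar>mollifier a \<phi> (x - y)\<bar>)" .
  qed
  have "((\<lambda>s. L (X s)) has_vector_derivative L Xd) (at t within {0..})"
    by (rule bounded_linear.has_vector_derivative[OF bl der])
  then have "vector_derivative (\<lambda>s. L (X s)) (at t within {0..}) = L Xd"
    by (rule vector_derivative_within[OF not_bot_within_Ici[OF t]])
  then show ?thesis by (simp add: conv_L)
qed
lemma univ_to_box:
  fixes f :: "real \<Rightarrow> real"
  assumes "\<And>x. x \<notin> {a..b} \<Longrightarrow> f x = 0"
  shows "integral UNIV f = integral {a..b} f"
proof -
  have "f = (\<lambda>x. if x \<in> {a..b} then f x else 0)" using assms by auto
  then have "integral UNIV f = integral UNIV (\<lambda>x. if x \<in> {a..b} then f x else 0)" by simp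
  also have "\<dots> = integral {a..b} f" by (rule integral_restrict_UNIV)
  finally show ?thesis .
qed

lemma extend_int:
  fixes f :: "real \<Rightarrow> real"
  assumes sub: "{a..b} \<subseteq> {A..B}" and z: "\<And>x. x \<in> {A..B} \<Longrightarrow> x \<notin> {a..b} \<Longrightarrow> f x = 0"
  shows "integral {a..b} f = integral {A..B} f"
proof -
  have "integral {a..b} f = integral UNIV (\<lambda>x. if x \<in> {a..b} then f x else 0)"
    by (rule integral_restrict_UNIV[symmetric])
  also have "(\<lambda>x. if x \<in> {a..b} then f x else 0) = (\<lambda>x. if x \<in> {A..B} then f x else 0)"
    using sub z by (auto intro!: ext)
  also have "integral UNIV \<dots> = integral {A..B} f" by (rule integral_restrict_UNIV)
  finally show ?thesis .
qed

lemma moll_bound: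
  assumes "\<And>z. \<bar>\<phi> z\<bar> \<le> Pm" "a > 0"
  shows "\<bar>mollifier a \<phi> z\<bar> \<le> Pm / a"
  using assms by (simp add: mollifier_def abs_divide divide_right_mono)

lemma kernel_mass:
  assumes ok: "moll_ok \<phi> r" and a: "a > 0" and Pm: "\<And>z. \<bar>\<phi> z\<bar> \<le> Pm"
  shows "integral {A..B} (\<lambda>x. \<bar>mollifier a \<phi> (x - y)\<bar>) \<le> 2 * r * Pm"
proof -
  let ?m = "mollifier a \<phi>"
  let ?I = "{y - a*r..y + a*r}"
  have ci: "(\<lambda>x. \<bar>?m (x - y)\<bar>) integrable_on {p..q}" for p q
    by (intro integrable_continuous_real continuous_intros moll_cont'[OF ok])
  have "integral {A..B} (\<lambda>x. \<bar>?m (x - y)\<bar>) = integral UNIV (\<lambda>x. if x \<in> {A..B} then \<bar>?m (x - y)\<bar> else 0)"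
    by (rule integral_restrict_UNIV[symmetric])
  also have "\<dots> \<le> integral UNIV (\<lambda>x. if x \<in> ?I then \<bar>?m (x - y)\<bar> else 0)"
  proof (rule Henstock_Kurzweil_Integration.integral_le)
    show "(\<lambda>x. if x \<in> {A..B} then \<bar>?m (x - y)\<bar> else 0) integrable_on UNIV"
      by (rule integrable_restrict_UNIV[THEN iffD2, OF ci])
    show "(\<lambda>x. if x \<in> ?I then \<bar>?m (x - y)\<bar> else 0) integrable_on UNIV"
      by (rule integrable_restrict_UNIV[THEN iffD2, OF ci])
    fix x
    show "(if x \<in> {A..B} then \<bar>?m (x - y)\<bar> else 0) \<le> (if x \<in> ?I then \<bar>?m (x - y)\<bar> else 0)"
    proof (cases "x \<in> ?I")
      case False
      then have "\<bar>x - y\<bar> > a * r" by auto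
      then show ?thesis using moll_zero[OF ok a] False by simp
    qed simp
  qed
  also have "\<dots> = integral ?I (\<lambda>x. \<bar>?m (x - y)\<bar>)" by (rule integral_restrict_UNIV)
  also have "\<dots> \<le> integral ?I (\<lambda>x. Pm / a)"
    by (rule Henstock_Kurzweil_Integration.integral_le[OF ci]) (auto intro: moll_bound[OF Pm a])
  also have "\<dots> = 2 * r * Pm"
    using a ok by (simp add: moll_ok_def field_simps)
  finally show ?thesis .
qed

lemma conv_est:
  assumes ok: "moll_ok \<phi> r" and a: "a > 0" and Yc: "continuous_on UNIV Y" and Kc: "continuous_on UNIV K"
    and box: "c \<le> x - a * r" "x + a * r \<le> d"
    and kb: "\<And>y. \<bar>x - y\<bar> \<le> a * r \<Longrightarrow> \<bar>K y\<bar> \<le> \<kappa> * \<bar>Y y\<bar>"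
  shows "\<bar>conv K (mollifier a \<phi>) x\<bar> \<le> \<kappa> * integral {c..d} (\<lambda>y. \<bar>Y y\<bar> * \<bar>mollifier a \<phi> (x - y)\<bar>)"
proof -
  let ?m = "mollifier a \<phi>"
  have "\<bar>conv K ?m x\<bar> = norm (integral {c..d} (\<lambda>y. K y * ?m (x - y)))"
    by (simp add: conv_box[OF ok a Kc box])
  also have "\<dots> \<le> integral {c..d} (\<lambda>y. \<kappa> * (\<bar>Y y\<bar> * \<bar>?m (x - y)\<bar>))"
  proof (rule integral_norm_bound_integral)
    show "(\<lambda>y. K y * ?m (x - y)) integrable_on {c..d}"
      by (intro integrable_continuous_real continuous_intros moll_cont'[OF ok] continuous_on_subset[OF Kc]) auto
    show "(\<lambda>y. \<kappa> * (\<bar>Y y\<bar> * \<bar>?m (x - y)\<bar>)) integrable_on {c..d}"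
      by (intro integrable_continuous_real continuous_intros moll_cont'[OF ok] continuous_on_subset[OF Yc]) auto
    fix y
    show "norm (K y * ?m (x - y)) \<le> \<kappa> * (\<bar>Y y\<bar> * \<bar>?m (x - y)\<bar>)"
    proof (cases "\<bar>x - y\<bar> \<le> a * r")
      case True
      then show ?thesis using kb[OF True]
        by (simp add: abs_mult mult_right_mono mult.assoc[symmetric])
    next
      case False
      then show ?thesis using moll_zero[OF ok a, of "x - y"] by simp
    qed
  qed
  also have "\<dots> = \<kappa> * integral {c..d} (\<lambda>y. \<bar>Y y\<bar> * \<bar>?m (x - y)\<bar>)"
    by (simp add: integral_mult)
  finally show ?thesis .
qed

lemma fubini_bound:
  assumes ok: "moll_ok \<phi> r" and a: "a > 0" and Pm: "\<And>z. \<bar>\<phi> z\<bar> \<le> Pm" and Yc: "continuous_on UNIV Y"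
  shows "integral {p..q} (\<lambda>x. integral {c..d} (\<lambda>y. \<bar>Y y\<bar> * \<bar>mollifier a \<phi> (x - y)\<bar>))
       \<le> 2 * r * Pm * integral {c..d} (\<lambda>y. \<bar>Y y\<bar>)"
proof -
  let ?m = "mollifier a \<phi>"
  have cont: "continuous_on (cbox (p, c) (q, d)) (\<lambda>(x, y). \<bar>Y y\<bar> * \<bar>?m (x - y)\<bar>)"
  proof -
    have "continuous_on (cbox (p, c) (q, d)) (\<lambda>z. \<bar>Y (snd z)\<bar> * \<bar>?m (fst z - snd z)\<bar>)"
      by (intro continuous_intros continuous_on_compose2[OF Yc] moll_cont'[OF ok]) auto
    then show ?thesis by (simp add: case_prod_beta)
  qed
  have "integral {p..q} (\<lambda>x. integral {c..d} (\<lambda>y. \<bar>Y y\<bar> * \<bar>?m (x - y)\<bar>))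
      = integral {c..d} (\<lambda>y. integral {p..q} (\<lambda>x. \<bar>Y y\<bar> * \<bar>?m (x - y)\<bar>))"
    using integral_swap_continuous[OF cont] by simp
  also have "\<dots> = integral {c..d} (\<lambda>y. \<bar>Y y\<bar> * integral {p..q} (\<lambda>x. \<bar>?m (x - y)\<bar>))"
    by (simp add: integral_mult)
  also have "\<dots> \<le> integral {c..d} (\<lambda>y. \<bar>Y y\<bar> * (2 * r * Pm))"
  proof (rule Henstock_Kurzweil_Integration.integral_le)
    have "continuous_on UNIV (\<lambda>y. integral {p..q} (\<lambda>x. \<bar>?m (x - y)\<bar>))"
    proof (rule integral_continuous_on_param[where a=p and b=q, simplified])
      have "continuous_on (UNIV \<times> {p..q}) (\<lambda>z. \<bar>?m (snd z - fst z)\<bar>)"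
        by (intro continuous_intros moll_cont'[OF ok])
      then show "continuous_on (UNIV \<times> {p..q}) (\<lambda>(y, x). \<bar>?m (x - y)\<bar>)"
        by (simp add: case_prod_beta)
    qed
    then show "(\<lambda>y. \<bar>Y y\<bar> * integral {p..q} (\<lambda>x. \<bar>?m (x - y)\<bar>)) integrable_on {c..d}"
      by (intro integrable_continuous_real continuous_intros continuous_on_subset[OF Yc])
         (auto intro: continuous_on_subset)
    show "(\<lambda>y. \<bar>Y y\<bar> * (2 * r * Pm)) integrable_on {c..d}"
      by (intro integrable_continuous_real continuous_intros continuous_on_subset[OF Yc]) auto
    fix y show "\<bar>Y y\<bar> * integral {p..q} (\<lambda>x. \<bar>?m (x - y)\<bar>) \<le> \<bar>Y y\<bar> * (2 * r * Pm)"
      by (intro mult_left_mono kernel_mass[OF ok a Pm]) auto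
  qed
  also have "\<dots> = 2 * r * Pm * integral {c..d} (\<lambda>y. \<bar>Y y\<bar>)"
    by (simp add: integral_mult mult.commute)
  finally show ?thesis .
qed
lemma kpt:
  fixes Y Ux Uy p1 r1 r2 e P1 P2 M1 \<Lambda> :: real
  assumes r1: "\<bar>r1\<bar> \<le> e * P2" and r2: "\<bar>r2\<bar> \<le> e * P2" and Uy: "\<bar>Uy\<bar> \<le> M1"
    and d: "\<bar>Uy - Ux\<bar> \<le> \<Lambda>" and p1: "\<bar>p1\<bar> \<le> P1"
  shows "\<bar>(p1 + r1) * (Y * max 0 Uy) + (- p1 + r2) * (Y * max 0 (- Uy)) + (- (Ux * p1)) * Y\<bar>
      \<le> (\<Lambda> * P1 + 2 * M1 * e * P2) * \<bar>Y\<bar>"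
proof -
  have k: "(p1 + r1) * (Y * max 0 Uy) + (- p1 + r2) * (Y * max 0 (- Uy)) + (- (Ux * p1)) * Y
     = Y * ((Uy - Ux) * p1 + max 0 Uy * r1 + max 0 (- Uy) * r2)"
    by (simp add: max_def algebra_simps)
  have a1: "\<bar>(Uy - Ux) * p1\<bar> \<le> \<Lambda> * P1"
    unfolding abs_mult by (rule mult_mono[OF d p1]) (use d in auto)
  have a2: "\<bar>max 0 Uy * r1\<bar> \<le> M1 * (e * P2)"
    unfolding abs_mult by (rule mult_mono) (use Uy r1 in \<open>auto simp: max_def\<close>)
  have a3: "\<bar>max 0 (- Uy) * r2\<bar> \<le> M1 * (e * P2)"
    unfolding abs_mult by (rule mult_mono) (use Uy r2 in \<open>auto simp: max_def\<close>)
  have "\<bar>(Uy - Ux) * p1 + max 0 Uy * r1 + max 0 (- Uy) * r2\<bar> \<le> \<Lambda> * P1 + 2 * M1 * e * P2"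
    using a1 a2 a3 abs_triangle_ineq[of "(Uy - Ux) * p1 + max 0 Uy * r1" "max 0 (- Uy) * r2"]
      abs_triangle_ineq[of "(Uy - Ux) * p1" "max 0 Uy * r1"] by linarith
  then show ?thesis unfolding k abs_mult by (metis abs_ge_zero mult.commute mult_right_mono)
qed
lemma main_est:
  fixes Y Yd U psi psi1 psi2 \<phi> :: "real \<Rightarrow> real"
  assumes ok: "moll_ok \<phi> r" and a: "a > 0" and ar: "a * r \<le> 1" and e: "0 < e" "e < 1"
    and Yc: "continuous_on UNIV Y" and Uc: "continuous_on UNIV U"
    and Ub: "\<And>x. \<bar>U x\<bar> \<le> M1" and L: "L \<ge> 0" and Ulip: "\<And>x y. \<bar>U y - U x\<bar> \<le> L * \<bar>y - x\<bar>"
    and Ydeq: "\<And>y. Yd y = (1/e) * (Y (y - e) * max 0 (U (y - e)) - Y y * \<bar>U y\<bar>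
                  + Y (y + e) * max 0 (- U (y + e)))"
    and d1: "\<And>x. (psi has_real_derivative psi1 x) (at x)"
    and d2: "\<And>x. (psi1 has_real_derivative psi2 x) (at x)"
    and P1: "\<And>x. \<bar>psi1 x\<bar> \<le> P1" and P2: "\<And>x. \<bar>psi2 x\<bar> \<le> P2"
    and R: "R > 0" and pz: "\<And>x. \<bar>x\<bar> > R \<Longrightarrow> psi x = 0" and p1z: "\<And>x. \<bar>x\<bar> > R \<Longrightarrow> psi1 x = 0"
    and Pm: "\<And>z. \<bar>\<phi> z\<bar> \<le> Pm"
  shows "\<bar>integral UNIV (\<lambda>x. conv Yd (mollifier a \<phi>) x * psi x - U x * conv Y (mollifier a \<phi>) x * psi1 x)\<bar>
    \<le> (L * a * r * P1 + 2 * M1 * e * P2) * (2 * r * Pm) * integral {-R-3..R+3} (\<lambda>y. \<bar>Y y\<bar>)"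
proof -
  let ?m = "mollifier a \<phi>"
  define Wp where "Wp y = Y y * max 0 (U y)" for y
  define Wm where "Wm y = Y y * max 0 (- U y)" for y
  define V where "V y = Y y * \<bar>U y\<bar>" for y
  have r: "r > 0" using ok by (simp add: moll_ok_def)
  have Wpc: "continuous_on UNIV Wp" unfolding Wp_def by (intro continuous_intros Yc Uc)
  have Wmc: "continuous_on UNIV Wm" unfolding Wm_def by (intro continuous_intros Yc Uc)
  have Vc: "continuous_on UNIV V" unfolding V_def by (intro continuous_intros Yc Uc)
  have sh: "continuous_on UNIV F \<Longrightarrow> continuous_on UNIV (\<lambda>y. F (y + s))" for F :: "real \<Rightarrow> real" and s
    by (rule continuous_on_compose2) (auto intro: continuous_intros)
  have CC: "continuous_on UNIV F \<Longrightarrow> continuous_on S (\<lambda>x. conv F ?m (g x))" if "continuous_on S g"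
    for F :: "real \<Rightarrow> real" and S g
    by (rule continuous_on_compose2[OF conv_cont[OF ok a], OF _ that]) auto
  have psic: "continuous_on UNIV psi" using d1 by (metis DERIV_isCont continuous_at_imp_continuous_on)
  have psi1c: "continuous_on UNIV psi1" using d2 by (metis DERIV_isCont continuous_at_imp_continuous_on)
  have psic': "continuous_on S (\<lambda>x. psi (g x))" if "continuous_on S g" for S g
    by (rule continuous_on_compose2[OF psic that]) auto
  have M1: "M1 \<ge> 0" using Ub[of 0] by linarith
  have P1p: "P1 \<ge> 0" using P1[of 0] by linarith
  have P2p: "P2 \<ge> 0" using P2[of 0] by linarith
  have Pmp: "Pm \<ge> 0" using Pm[of 0] by linarith
  \<comment> \<open>Step 1: the discrete derivative commutes with the convolution\<close>
  have Yd_eq: "Yd = (\<lambda>y. (1/e) * Wp (y + -e) + (-(1/e)) * V y + (1/e) * Wm (y + e))"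
    by (rule ext) (simp add: Ydeq Wp_def Wm_def V_def algebra_simps)
  have cYd: "conv Yd ?m x = (1/e) * conv Wp ?m (x + -e) + (-(1/e)) * conv V ?m x + (1/e) * conv Wm ?m (x + e)" for x
    unfolding Yd_eq conv_lin3[OF ok a sh[OF Wpc] Vc sh[OF Wmc]] conv_shift[OF ok a Wpc] conv_shift[OF ok a Wmc] ..
  have cV: "conv V ?m x = 1 * conv Wp ?m x + 1 * conv Wm ?m x + 0 * conv Y ?m x" for x
  proof -
    have "V = (\<lambda>y. 1 * Wp y + 1 * Wm y + 0 * Y y)"
      by (rule ext) (simp add: V_def Wp_def Wm_def max_def algebra_simps)
    then have "conv V ?m x = conv (\<lambda>y. 1 * Wp y + 1 * Wm y + 0 * Y y) ?m x" by (simp only:)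
    also have "\<dots> = 1 * conv Wp ?m x + 1 * conv Wm ?m x + 0 * conv Y ?m x"
      by (rule conv_lin3[OF ok a Wpc Wmc Yc])
    finally show ?thesis .
  qed
  define g where "g x = conv Yd ?m x * psi x - U x * conv Y ?m x * psi1 x" for x
  have "integral UNIV g = integral {-R..R} g"
    by (rule univ_to_box) (auto simp: g_def pz p1z)
  define J where "J = {-R-1..R+1}"
  define f1 where "f1 z = conv Wp ?m z * psi (z + e)" for z
  define f2 where "f2 z = conv V ?m z * psi z" for z
  define f3 where "f3 z = conv Wm ?m z * psi (z + -e)" for z
  define f4 where "f4 z = U z * conv Y ?m z * psi1 z" for z
  have f1c: "continuous_on S f1" for S unfolding f1_def
    by (auto intro!: continuous_intros CC Wpc psic')
  have f2c: "continuous_on S f2" for S unfolding f2_def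
    by (auto intro!: continuous_intros CC Vc psic')
  have f3c: "continuous_on S f3" for S unfolding f3_def
    by (auto intro!: continuous_intros CC Wmc psic')
  have f4c: "continuous_on S f4" for S unfolding f4_def
    by (auto intro!: continuous_intros CC Yc continuous_on_subset[OF Uc] continuous_on_subset[OF psi1c])
  have hasI: "(f has_integral integral T f) T" if "continuous_on T f" "T = {p..q}" for f :: "real \<Rightarrow> real" and T p q
    using that integrable_integral integrable_continuous_real by blast
  have g_eq: "g x = (1/e) * (f1 (x + -e) - f2 x + f3 (x + e)) - f4 x" for x
    by (simp add: g_def f1_def f2_def f3_def f4_def cYd algebra_simps)
  have I1: "integral {-R..R} (\<lambda>x. f1 (x + -e)) = integral J f1"
  proof -
    have "integral {-R..R} (\<lambda>x. f1 (x + -e)) = integral {-R + -e..R + -e} f1"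
      by (rule integral_translate_real[OF f1c])
    also have "\<dots> = integral J f1"
      unfolding J_def by (rule extend_int) (use e in \<open>auto simp: J_def f1_def intro!: pz\<close>)
    finally show ?thesis .
  qed
  have I3: "integral {-R..R} (\<lambda>x. f3 (x + e)) = integral J f3"
  proof -
    have "integral {-R..R} (\<lambda>x. f3 (x + e)) = integral {-R + e..R + e} f3"
      by (rule integral_translate_real[OF f3c])
    also have "\<dots> = integral J f3"
      unfolding J_def by (rule extend_int) (use e in \<open>auto simp: J_def f3_def intro!: pz\<close>)
    finally show ?thesis .
  qed
  have I2: "integral {-R..R} f2 = integral J f2"
    unfolding J_def by (rule extend_int) (auto simp: J_def f2_def intro!: pz)
  have I4: "integral {-R..R} f4 = integral J f4"
    unfolding J_def by (rule extend_int) (auto simp: J_def f4_def intro!: p1z)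
  define h where "h x = (1/e) * (f1 x - f2 x + f3 x) - f4 x" for x
  have "(g has_integral ((1/e) * (integral J f1 - integral J f2 + integral J f3) - integral J f4)) {-R..R}"
  proof -
    have "((\<lambda>x. (1/e) * (f1 (x + -e) - f2 x + f3 (x + e)) - f4 x) has_integral
        ((1/e) * (integral {-R..R} (\<lambda>x. f1 (x + -e)) - integral {-R..R} f2
           + integral {-R..R} (\<lambda>x. f3 (x + e))) - integral {-R..R} f4)) {-R..R}"
      by (intro has_integral_diff has_integral_add has_integral_mult_right hasI f2c f4c
          continuous_on_compose2[OF f1c] continuous_on_compose2[OF f3c])
         (auto intro: continuous_intros)
    then show ?thesis using I1 I2 I3 I4 by (simp add: g_eq[abs_def])
  qed
  moreover have "(h has_integral ((1/e) * (integral J f1 - integral J f2 + integral J f3) - integral J f4)) J"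
    unfolding h_def J_def
    by (intro has_integral_diff has_integral_add has_integral_mult_right hasI[OF _ refl] f1c f2c f3c f4c)
  ultimately have gh: "integral UNIV g = integral J h"
    using \<open>integral UNIV g = integral {-R..R} g\<close> by (simp add: integral_unique)
  define \<kappa> where "\<kappa> = L * a * r * P1 + 2 * M1 * e * P2"
  have \<kappa>: "\<kappa> \<ge> 0" unfolding \<kappa>_def using L a r P1p M1 e P2p by simp
  define B where "B = {-R-3..R+3}"
  define Qf where "Qf x = integral B (\<lambda>y. \<bar>Y y\<bar> * \<bar>?m (x - y)\<bar>)" for x
  have hb: "\<bar>h x\<bar> \<le> \<kappa> * Qf x" if x: "x \<in> J" for x
  proof -
    define p where "p = (psi (x + e) - psi x) / e"
    define q where "q = (psi (x + -e) - psi x) / e"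
    define w where "w = - (U x * psi1 x)"
    define K where "K y = p * Wp y + q * Wm y + w * Y y" for y
    have Kc: "continuous_on UNIV K" unfolding K_def by (intro continuous_intros Wpc Wmc Yc)
    have "h x = p * conv Wp ?m x + q * conv Wm ?m x + w * conv Y ?m x"
      using e unfolding h_def f1_def f2_def f3_def f4_def p_def q_def w_def cV
      by (simp add: field_simps)
    also have "\<dots> = conv K ?m x"
      unfolding K_def by (rule conv_lin3[OF ok a Wpc Wmc Yc, symmetric])
    finally have hK: "h x = conv K ?m x" .
    have t1: "\<bar>psi (x + e) - psi x - e * psi1 x\<bar> \<le> e\<^sup>2 * P2" by (rule taylor_bound[OF d1 d2 P2])
    have t2: "\<bar>psi (x + -e) - psi x - (-e) * psi1 x\<bar> \<le> (-e)\<^sup>2 * P2" by (rule taylor_bound[OF d1 d2 P2])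
    have r1: "\<bar>p - psi1 x\<bar> \<le> e * P2"
    proof -
      have "p - psi1 x = (psi (x + e) - psi x - e * psi1 x) / e" using e by (simp add: p_def field_simps)
      then have "\<bar>p - psi1 x\<bar> = \<bar>psi (x + e) - psi x - e * psi1 x\<bar> / e" using e by (simp add: abs_divide)
      also have "\<dots> \<le> e\<^sup>2 * P2 / e" using t1 e by (intro divide_right_mono) auto
      also have "\<dots> = e * P2" using e by (simp add: power2_eq_square)
      finally show ?thesis .
    qed
    have r2: "\<bar>q - (- psi1 x)\<bar> \<le> e * P2"
    proof -
      have "q - (- psi1 x) = (psi (x + -e) - psi x - (-e) * psi1 x) / e" using e by (simp add: q_def field_simps)
      then have "\<bar>q - (- psi1 x)\<bar> = \<bar>psi (x + -e) - psi x - (-e) * psi1 x\<bar> / e" using e by (simp add: abs_divide)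
      also have "\<dots> \<le> (-e)\<^sup>2 * P2 / e" using t2 e by (intro divide_right_mono) auto
      also have "\<dots> = e * P2" using e by (simp add: power2_eq_square)
      finally show ?thesis .
    qed
    have kb: "\<bar>K y\<bar> \<le> \<kappa> * \<bar>Y y\<bar>" if xy: "\<bar>x - y\<bar> \<le> a * r" for y
    proof -
      have lip: "\<bar>U y - U x\<bar> \<le> L * a * r"
        using Ulip[of x y] mult_left_mono[OF xy L] by (simp add: abs_minus_commute mult.assoc)
      have "K y = (psi1 x + (p - psi1 x)) * (Y y * max 0 (U y)) + (- psi1 x + (q - (- psi1 x))) * (Y y * max 0 (- U y))
          + (- (U x * psi1 x)) * Y y"
        by (simp add: K_def Wp_def Wm_def w_def)
      also have "\<bar>\<dots>\<bar> \<le> (L * a * r * P1 + 2 * M1 * e * P2) * \<bar>Y y\<bar>"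
        by (rule kpt[OF r1 r2 Ub lip P1])
      finally show ?thesis by (simp add: \<kappa>_def)
    qed
    have "\<bar>h x\<bar> \<le> \<kappa> * integral B (\<lambda>y. \<bar>Y y\<bar> * \<bar>?m (x - y)\<bar>)"
      unfolding hK B_def
      by (rule conv_est[OF ok a Yc Kc _ _ kb]) (use x ar in \<open>auto simp: J_def\<close>)
    then show ?thesis by (simp add: Qf_def)
  qed
  have hc: "continuous_on J h" unfolding h_def
    by (intro continuous_intros f1c f2c f3c f4c)
  have Qfc: "continuous_on J Qf"
    unfolding Qf_def B_def
  proof (rule integral_continuous_on_param[where a="-R-3" and b="R+3", simplified])
    have "continuous_on (J \<times> {-R-3..R+3}) (\<lambda>z. \<bar>Y (snd z)\<bar> * \<bar>?m (fst z - snd z)\<bar>)"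
      by (intro continuous_intros continuous_on_compose2[OF Yc] moll_cont'[OF ok]) auto
    then show "continuous_on (J \<times> {-R-3..R+3}) (\<lambda>(x, y). \<bar>Y y\<bar> * \<bar>?m (x - y)\<bar>)"
      by (simp add: case_prod_beta)
  qed
  have "\<bar>integral J h\<bar> \<le> integral J (\<lambda>x. \<kappa> * Qf x)"
  proof -
    have "h integrable_on J" unfolding J_def by (rule integrable_continuous_real) (use hc in \<open>simp add: J_def\<close>)
    moreover have "(\<lambda>x. \<kappa> * Qf x) integrable_on J" unfolding J_def
      by (rule integrable_continuous_real) (use Qfc in \<open>auto simp: J_def intro!: continuous_intros\<close>)
    ultimately show ?thesis using integral_norm_bound_integral[of h J "\<lambda>x. \<kappa> * Qf x"] hb by auto
  qed
  also have "\<dots> = \<kappa> * integral J Qf" by (simp add: integral_mult)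
  also have "integral J Qf \<le> 2 * r * Pm * integral B (\<lambda>y. \<bar>Y y\<bar>)"
    unfolding J_def B_def Qf_def by (rule fubini_bound[OF ok a Pm Yc])
  finally have "\<bar>integral J h\<bar> \<le> \<kappa> * (2 * r * Pm * integral B (\<lambda>y. \<bar>Y y\<bar>))"
    using \<kappa> by (simp add: mult_left_mono)
  then show ?thesis
    using gh by (simp add: g_def[abs_def] \<kappa>_def B_def mult.assoc)
qed
lemma periodic_integral_sym:
  fixes g :: "real \<Rightarrow> real"
  assumes cont: "continuous_on UNIV g" and per: "\<And>x. g (x + 2*pi) = g x"
  shows "integral {-pi - 2*pi*real m..pi + 2*pi*real m} g = real (2*m+1) * integral {-pi..pi} g"
proof -
  have per_n: "g (x + 2*pi*real k) = g x" for x k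
  proof (induction k)
    case (Suc k)
    have "g (x + 2*pi*real (Suc k)) = g ((x + 2*pi*real k) + 2*pi)"
      by (simp add: algebra_simps)
    then show ?case using Suc per by simp
  qed simp
  have "integral {-pi..-pi + 2*pi*real (2*m+1)} (\<lambda>x. g (x + - (2*pi*real m)))
      = integral {-pi + - (2*pi*real m)..(-pi + 2*pi*real (2*m+1)) + - (2*pi*real m)} g"
    by (rule integral_translate_real) (rule continuous_on_subset[OF cont], auto)
  also have "{-pi + - (2*pi*real m)..(-pi + 2*pi*real (2*m+1)) + - (2*pi*real m)}
      = {-pi - 2*pi*real m..pi + 2*pi*real m}"
    by (simp add: algebra_simps)
  finally have "integral {-pi - 2*pi*real m..pi + 2*pi*real m} g
      = integral {-pi..-pi + 2*pi*real (2*m+1)} (\<lambda>x. g (x + - (2*pi*real m)))" by simp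
  also have "(\<lambda>x. g (x + - (2*pi*real m))) = g"
  proof
    fix x show "g (x + - (2*pi*real m)) = g x"
      using per_n[of "x + - (2*pi*real m)" m] by simp
  qed
  also have "integral {-pi..-pi + 2*pi*real (2*m+1)} g = real (2*m+1) * integral {-pi..pi} g"
    by (rule periodic_integral_multi[OF cont per])
  finally show ?thesis .
qed

theorem lemma2:
  fixes u X :: "real \<Rightarrow> real \<Rightarrow> (real \<Rightarrow>\<^sub>C real)"
    and v0 :: "real \<Rightarrow> (real \<Rightarrow>\<^sub>C real)"
    and phi :: "real \<Rightarrow> real"
    and alpha beta M1 :: real
  assumes u_per: "\<And>e t x. 0 < e \<Longrightarrow> e < 1 \<Longrightarrow> 0 \<le> t \<Longrightarrow> u e t (x + 2 * pi) = u e t x"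
    and u_diff: "\<And>e t x. 0 < e \<Longrightarrow> e < 1 \<Longrightarrow> 0 \<le> t \<Longrightarrow> (\<lambda>y. u e t y) differentiable (at x)"
    and u_cont: "\<And>e. 0 < e \<Longrightarrow> e < 1 \<Longrightarrow> continuous_on {0..} (u e)"
    and M1_pos: "M1 > 0"
    and u_bound: "\<And>e t x. 0 < e \<Longrightarrow> e < 1 \<Longrightarrow> 0 \<le> t \<Longrightarrow> \<bar>u e t x\<bar> \<le> M1"
    and v0_per: "\<And>e x. 0 < e \<Longrightarrow> e < 1 \<Longrightarrow> v0 e (x + 2 * pi) = v0 e x"
    and v0_L1: "\<exists>C. \<forall>e. 0 < e \<and> e < 1 \<longrightarrow> integral {-pi..pi} (\<lambda>x. \<bar>v0 e x\<bar>) \<le> C"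
    and X_init: "\<And>e. 0 < e \<Longrightarrow> e < 1 \<Longrightarrow> X e 0 = v0 e"
    and X_ode: "\<And>e. 0 < e \<Longrightarrow> e < 1 \<Longrightarrow>
       \<exists>X' :: real \<Rightarrow> (real \<Rightarrow>\<^sub>C real). continuous_on {0..} X' \<and>
         (\<forall>t \<ge> 0. (X e has_vector_derivative X' t) (at t within {0..}) \<and>
            (\<forall>x. X' t x = (1 / e) * (X e t (x - e) * max 0 (u e t (x - e))
                                     - X e t x * \<bar>u e t x\<bar>
                                     + X e t (x + e) * max 0 (- u e t (x + e)))))"
    and phi_smooth: "smooth_fun phi"
    and phi_supp: "compact_supp phi"
    and phi_int: "integral UNIV phi = 1"
    and alpha: "0 < alpha" "alpha \<le> 1"
    and beta: "0 < beta" "beta < alpha"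
    and u_deriv_bound: "\<And>\<delta>. \<delta> > 0 \<Longrightarrow> \<exists>c. \<forall>e t x. 0 < e \<and> e < 1 \<and> 0 \<le> t \<and> t \<le> \<delta> \<longrightarrow>
        \<bar>deriv (\<lambda>y. u e t y) x\<bar> \<le> c * e powr (- beta)"
  shows "\<forall>psi t. smooth_fun psi \<and> compact_supp psi \<and> 0 \<le> t \<longrightarrow>
    ((\<lambda>e. integral UNIV (\<lambda>x.
        vector_derivative (\<lambda>s. vfam X phi alpha e x s) (at t within {0..}) * psi x
        - u e t x * vfam X phi alpha e x t * deriv psi x)) \<longlongrightarrow> 0) (at_right 0)"
proof (intro allI impI)
  fix psi :: "real \<Rightarrow> real" and t :: real
  assume H: "smooth_fun psi \<and> compact_supp psi \<and> 0 \<le> t"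
  then have psm: "smooth_fun psi" and psup: "compact_supp psi" and t0: "0 \<le> t" by auto
  obtain Dp where Dp0: "Dp 0 = psi" and Dpd: "\<And>n x. (Dp n has_real_derivative Dp (Suc n) x) (at x)"
    using psm unfolding smooth_fun_def by blast
  define psi1 where "psi1 = Dp (Suc 0)"
  define psi2 where "psi2 = Dp (Suc (Suc 0))"
  have d1: "(psi has_real_derivative psi1 x) (at x)" for x
    using Dpd[of 0 x] Dp0 by (simp add: psi1_def)
  have d2: "(psi1 has_real_derivative psi2 x) (at x)" for x
    using Dpd[of "Suc 0" x] by (simp add: psi1_def psi2_def)
  have dpsi: "deriv psi x = psi1 x" for x by (rule DERIV_imp_deriv[OF d1])
  have psi1c: "continuous_on UNIV psi1" using d2 by (metis DERIV_isCont continuous_at_imp_continuous_on)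
  have psi2c: "continuous_on UNIV psi2"
    using Dpd[of "Suc (Suc 0)"] unfolding psi2_def by (metis DERIV_isCont continuous_at_imp_continuous_on)
  obtain R where R: "R > 0" and pz: "\<And>x. \<bar>x\<bar> > R \<Longrightarrow> psi x = 0"
    using compact_supp_R[OF psup] by blast
  have p1z: "\<bar>x\<bar> > R \<Longrightarrow> psi1 x = 0" for x by (rule deriv_zero_outside[OF d1 pz])
  have p2z: "\<bar>x\<bar> > R \<Longrightarrow> psi2 x = 0" for x by (rule deriv_zero_outside[OF d2 p1z])
  obtain P1 where P1: "P1 \<ge> 0" "\<And>x. \<bar>psi1 x\<bar> \<le> P1" using bounded_outside[OF psi1c p1z] by blast
  obtain P2 where P2: "P2 \<ge> 0" "\<And>x. \<bar>psi2 x\<bar> \<le> P2" using bounded_outside[OF psi2c p2z] by blast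
  have phic: "continuous_on UNIV phi" by (rule smooth_cont[OF phi_smooth])
  obtain r where r: "r > 0" and phz: "\<And>x. \<bar>x\<bar> > r \<Longrightarrow> phi x = 0"
    using compact_supp_R[OF phi_supp] by blast
  have ok: "moll_ok phi r" using phic r phz by (simp add: moll_ok_def)
  obtain Pm where Pm: "Pm \<ge> 0" "\<And>x. \<bar>phi x\<bar> \<le> Pm" using bounded_outside[OF phic phz] by blast
  obtain c where c: "\<forall>e t' x. 0 < e \<and> e < 1 \<and> 0 \<le> t' \<and> t' \<le> t + 1 \<longrightarrow>
        \<bar>deriv (\<lambda>y. u e t' y) x\<bar> \<le> c * e powr (- beta)"
    using u_deriv_bound[of "t + 1"] t0 by auto
  define c' where "c' = max c 0"
  have c': "c' \<ge> 0" by (simp add: c'_def)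
  obtain C where C: "\<forall>e. 0 < e \<and> e < 1 \<longrightarrow> integral {-pi..pi} (\<lambda>x. \<bar>v0 e x\<bar>) \<le> C"
    using v0_L1 by blast
  define C' where "C' = max C 0"
  define m0 where "m0 = nat \<lceil>R + 3\<rceil>"
  have m0: "R + 3 \<le> pi + 2*pi*real m0"
  proof -
    have "R + 3 \<le> real m0" unfolding m0_def by linarith
    also have "\<dots> \<le> 2*pi*real m0" using pi_gt3 mult_right_mono[of 1 "2*pi" "real m0"] by simp
    finally show ?thesis using pi_gt_zero by linarith
  qed
  define K where "K = (2*r*Pm) * (real (2*m0+1) * C')"
  have K: "K \<ge> 0" using r Pm by (simp add: K_def C'_def)
  define G where "G e = (c' * e powr (alpha - beta) * r * P1 + 2*M1*e*P2) * K" for e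
  have est: "\<bar>integral UNIV (\<lambda>x. vector_derivative (\<lambda>s. vfam X phi alpha e x s) (at t within {0..}) * psi x
        - u e t x * vfam X phi alpha e x t * deriv psi x)\<bar> \<le> G e"
    if e: "0 < e" "e < 1" and ear: "e powr alpha * r \<le> 1" for e
  proof -
    define a where "a = e powr alpha"
    have a: "a > 0" using e by (simp add: a_def)
    obtain Xd where Xd: "continuous_on {0..} Xd"
      "\<forall>t\<ge>0. (X e has_vector_derivative Xd t) (at t within {0..}) \<and>
         (\<forall>x. Xd t x = (1 / e) * (X e t (x - e) * max 0 (u e t (x - e)) - X e t x * \<bar>u e t x\<bar>
              + X e t (x + e) * max 0 (- u e t (x + e))))"
      using X_ode[OF e] by blast
    have der: "(X e has_vector_derivative Xd s) (at s within {0..})" if "s \<ge> 0" for s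
      using Xd(2) that by blast
    have eqd: "Xd s x = (1 / e) * (X e s (x - e) * max 0 (u e s (x - e)) - X e s x * \<bar>u e s x\<bar>
              + X e s (x + e) * max 0 (- u e s (x + e)))" if "s \<ge> 0" for s x
      using Xd(2) that by blast
    have Ub: "\<bar>u e s x\<bar> \<le> M1" if "s \<ge> 0" for s x using u_bound[OF e that] .
    have Uper: "u e s (x + 2*pi) = u e s x" if "s \<ge> 0" for s x using u_per[OF e that] .
    have per0: "X e 0 (x + 2*pi) = X e 0 x" for x using X_init[OF e] v0_per[OF e] by simp
    have e2pi: "e \<le> 2*pi" using e pi_gt3 by linarith
    have integrand: "(\<lambda>x. vector_derivative (\<lambda>s. vfam X phi alpha e x s) (at t within {0..}) * psi x
        - u e t x * vfam X phi alpha e x t * deriv psi x)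
      = (\<lambda>x. conv (\<lambda>y. Xd t y) (mollifier a phi) x * psi x
        - u e t x * conv (\<lambda>y. X e t y) (mollifier a phi) x * psi1 x)"
    proof
      fix x
      have "vector_derivative (\<lambda>s. vfam X phi alpha e x s) (at t within {0..})
          = conv (\<lambda>y. Xd t y) (mollifier a phi) x"
        unfolding vfam_def a_def by (rule vd_conv[OF ok _ der[OF t0] t0]) (use e in simp)
      then show "vector_derivative (\<lambda>s. vfam X phi alpha e x s) (at t within {0..}) * psi x
        - u e t x * vfam X phi alpha e x t * deriv psi x
        = conv (\<lambda>y. Xd t y) (mollifier a phi) x * psi x
        - u e t x * conv (\<lambda>y. X e t y) (mollifier a phi) x * psi1 x"
        by (simp add: dpsi vfam_def a_def)
    qed
    define L where "L = c' * e powr (- beta)"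
    have L: "L \<ge> 0" using c' by (simp add: L_def)
    have Ulip: "\<bar>u e t y - u e t x\<bar> \<le> L * \<bar>y - x\<bar>" for x y
    proof (rule lipschitz_deriv[of "\<lambda>y. u e t y" "deriv (\<lambda>y. u e t y)"])
      show "((\<lambda>y. u e t y) has_real_derivative deriv (\<lambda>y. u e t y) z) (at z)" for z
        using u_diff[OF e t0] DERIV_deriv_iff_real_differentiable by blast
      show "\<bar>deriv (\<lambda>y. u e t y) z\<bar> \<le> L" for z
      proof -
        have "\<bar>deriv (\<lambda>y. u e t y) z\<bar> \<le> c * e powr (- beta)" using c e t0 by auto
        also have "\<dots> \<le> c' * e powr (- beta)" by (intro mult_right_mono) (auto simp: c'_def)
        finally show ?thesis by (simp add: L_def)
      qed
    qed
    have Nfb: "Nf (X e t) \<le> C'"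
    proof -
      have "Nf (X e t) \<le> Nf (X e 0)"
        by (rule ode_L1[OF e(1) e2pi M1_pos Ub Uper der eqd per0 t0])
      also have "\<dots> \<le> C'"
      proof -
        have "Nf (X e 0) \<le> C" using C e X_init[OF e] by (simp add: Nf_def)
        then show ?thesis by (simp add: C'_def)
      qed
      finally show ?thesis .
    qed
    have perT: "X e t (x + 2*pi) = X e t x" for x
      by (rule ode_periodic[OF e(1) M1_pos Ub Uper der eqd per0 t0])
    have Ib: "integral {-R-3..R+3} (\<lambda>y. \<bar>X e t y\<bar>) \<le> real (2*m0+1) * C'"
    proof -
      have "integral {-R-3..R+3} (\<lambda>y. \<bar>X e t y\<bar>) \<le> integral {-pi - 2*pi*real m0..pi + 2*pi*real m0} (\<lambda>y. \<bar>X e t y\<bar>)"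
        by (rule integral_subset_le) (use m0 in \<open>auto intro!: integrable_continuous_real continuous_intros\<close>)
      also have "\<dots> = real (2*m0+1) * Nf (X e t)"
        unfolding Nf_def by (rule periodic_integral_sym) (auto intro!: continuous_intros simp: perT)
      also have "\<dots> \<le> real (2*m0+1) * C'" using Nfb by (intro mult_left_mono) auto
      finally show ?thesis .
    qed
    have "\<bar>integral UNIV (\<lambda>x. conv (\<lambda>y. Xd t y) (mollifier a phi) x * psi x
        - u e t x * conv (\<lambda>y. X e t y) (mollifier a phi) x * psi1 x)\<bar>
      \<le> (L * a * r * P1 + 2 * M1 * e * P2) * (2 * r * Pm) * integral {-R-3..R+3} (\<lambda>y. \<bar>X e t y\<bar>)"
    proof (rule main_est[OF ok a _ e _ _ _ L Ulip _ d1 d2 P1(2) P2(2) R pz p1z Pm(2)])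
      show "a * r \<le> 1" using ear by (simp add: a_def)
      show "continuous_on UNIV (\<lambda>y. X e t y)" by simp
      show "continuous_on UNIV (\<lambda>y. u e t y)" by simp
      show "\<bar>u e t x\<bar> \<le> M1" for x by (rule Ub[OF t0])
      show "Xd t y = (1/e) * (X e t (y - e) * max 0 (u e t (y - e)) - X e t y * \<bar>u e t y\<bar>
                  + X e t (y + e) * max 0 (- u e t (y + e)))" for y by (rule eqd[OF t0])
    qed
    also have "\<dots> \<le> (L * a * r * P1 + 2 * M1 * e * P2) * (2 * r * Pm) * (real (2*m0+1) * C')"
      using L a r P1 M1_pos e P2 Pm Ib by (intro mult_left_mono) auto
    also have "L * a = c' * e powr (alpha - beta)"
      using e by (simp add: L_def a_def mult.assoc powr_add[symmetric])
    finally show ?thesis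
      unfolding integrand by (simp add: G_def K_def mult.assoc)
  qed
  have lim_a: "((\<lambda>e::real. e powr alpha) \<longlongrightarrow> 0) (at_right 0)"
    by (rule tendsto_zero_powrI) (auto intro!: tendsto_ident_at eventually_at_rightI[of 0 1] simp: alpha)
  have ev1: "\<forall>\<^sub>F e in at_right 0. e powr alpha < 1 / r"
    using order_tendstoD(2)[OF lim_a] r by simp
  have ev2: "\<forall>\<^sub>F e in at_right 0. (0::real) < e \<and> e < 1"
    using eventually_at_right_real[of 0 1] by simp
  have ev: "\<forall>\<^sub>F e in at_right 0. norm (integral UNIV (\<lambda>x. vector_derivative (\<lambda>s. vfam X phi alpha e x s) (at t within {0..}) * psi x
        - u e t x * vfam X phi alpha e x t * deriv psi x)) \<le> G e"
    using ev1 ev2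
  proof eventually_elim
    case (elim e)
    then have "e powr alpha * r \<le> 1" using r by (simp add: field_simps)
    then show ?case using est elim by simp
  qed
  have lim_b: "((\<lambda>e::real. e powr (alpha - beta)) \<longlongrightarrow> 0) (at_right 0)"
    by (rule tendsto_zero_powrI) (auto intro!: tendsto_ident_at eventually_at_rightI[of 0 1] simp: beta)
  have "(G \<longlongrightarrow> (c' * 0 * r * P1 + 2*M1*0*P2) * K) (at_right 0)"
    unfolding G_def by (intro tendsto_intros lim_b tendsto_ident_at)
  then have "(G \<longlongrightarrow> 0) (at_right 0)" by simp
  then show "((\<lambda>e. integral UNIV (\<lambda>x. vector_derivative (\<lambda>s. vfam X phi alpha e x s) (at t within {0..}) * psi x
        - u e t x * vfam X phi alpha e x t * deriv psi x)) \<longlongrightarrow> 0) (at_right 0)"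
    by (rule Lim_null_comparison[OF ev])
qed

end
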